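(* Let $(X,\mu)$ be a non-atomic probability space equipped with a tree $\mathcal T$, let $M_{\mathcal T}$ be the associated dyadic maximal operator, and let $p>1$. Let $\phi:X\to[0,+\infty)$ satisfy $\int_X\phi\,d\mu=f$ and $\int_X\phi^p\,d\mu=F$ where $0<f^p\leq F$, and let $K\subseteq X$ be measurable with $\mu(K)=k$, where $k\in(0,1]$. Then \[ \int_K(M_{\mathcal T}\phi)^p\,d\mu\leq\int_0^k[\phi^\star(u)]^p\,du\cdot\omega_p\!\left(\frac{\left(\int_0^k\phi^\star(u)\,du\right)^p}{k^{p-1}\int_0^k[\phi^\star(u)]^p\,du}\right)^p. \]
   Context: A tree on a non-atomic probability space $(X,\mu)$ is a family $\mathcal T$ of measurable subsets of $X$ such that: (i) $X\in\mathcal T$ and $\mu(I)>0$ for every $I\in\mathcal T$; (ii) for every $I\in\mathcal T$ there is a finite or countable subset $C(I)\subseteq\mathcal T$ with at least two elements, whose elements are pairwise disjoint subsets of $I$ with union $I$; (iii) $\mathcal T=\bigcup_{m\geq0}\mathcal T_{(m)}$, where $\mathcal T_{(0)}=\{X\}$ and $\mathcal T_{(m+1)}=\bigcup_{I\in\mathcal T_{(m)}}C(I)$; (iv) $\lim_{m\to\infty}\sup_{I\in\mathcal T_{(m)}}\mu(I)=0$; (v) $\mathcal T$ differentiates $L^1(X,\mu)$. The dyadic maximal operator is $M_{\mathcal T}\phi(x)=\sup\{\frac{1}{\mu(I)}\int_I|\phi|\,d\mu: x\in I\in\mathcal T\}$. $\phi^\star:(0,1]\to[0,+\infty)$ is the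 non-increasing, left-continuous rearrangement of $\phi$ (equimeasurable with $\phi$). $\omega_p:[0,1]\to[1,\frac{p}{p-1}]$ is the inverse of the function $H_p(z)=pz^{p-1}-(p-1)z^p$ restricted to $[1,\frac{p}{p-1}]$. *)

theory Defs
  imports "HOL-Probability.Probability"
begin

definition non_atomic :: "'a measure \<Rightarrow> bool" where
  "non_atomic M \<longleftrightarrow> (\<forall>A\<in>sets M. measure M A > 0 \<longrightarrow>
      (\<exists>B\<in>sets M. B \<subseteq> A \<and> 0 < measure M B \<and> measure M B < measure M A))"

fun tree_level :: "('a set \<Rightarrow> 'a set set) \<Rightarrow> 'a set \<Rightarrow> nat \<Rightarrow> 'a set set" where
  "tree_level C X 0 = {X}"
| "tree_level C X (Suc m) = \<Union> (C ` tree_level C X m)"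

definition avg :: "'a measure \<Rightarrow> 'a set \<Rightarrow> ('a \<Rightarrow> real) \<Rightarrow> real" where
  "avg M I \<phi> = (1 / measure M I) * (\<integral>y\<in>I. \<bar>\<phi> y\<bar> \<partial>M)"

definition differentiates_L1 :: "'a measure \<Rightarrow> 'a set set \<Rightarrow> bool" where
  "differentiates_L1 M T \<longleftrightarrow> (\<forall>\<phi> :: 'a \<Rightarrow> real. integrable M \<phi> \<longrightarrow>
     (AE x in M. \<forall>\<epsilon>>0. \<exists>\<delta>>0. \<forall>I\<in>T. x \<in> I \<and> measure M I < \<delta> \<longrightarrow>
        \<bar>(1 / measure M I) * (\<integral>y\<in>I. \<phi> y \<partial>M) - \<phi> x\<bar> < \<epsilon>))"

definition is_tree :: "'a measure \<Rightarrow> 'a set set \<Rightarrow> bool" where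
  "is_tree M T \<longleftrightarrow> T \<subseteq> sets M \<and> space M \<in> T \<and> (\<forall>I\<in>T. measure M I > 0) \<and>
    (\<exists>C. (\<forall>I\<in>T. C I \<subseteq> T \<and> countable (C I) \<and> (\<exists>J1\<in>C I. \<exists>J2\<in>C I. J1 \<noteq> J2) \<and>
              disjoint (C I) \<and> (\<forall>J\<in>C I. J \<subseteq> I) \<and> \<Union> (C I) = I)
       \<and> T = (\<Union>m. tree_level C (space M) m)
       \<and> ((\<lambda>m. SUP I\<in>tree_level C (space M) m. measure M I) \<longlonglongrightarrow> 0))
    \<and> differentiates_L1 M T"

definition dyadic_max :: "'a measure \<Rightarrow> 'a set set \<Rightarrow> ('a \<Rightarrow> real) \<Rightarrow> 'a \<Rightarrow> ennreal" where
  "dyadic_max M T \<phi> x = (SUP I\<in>{I\<in>T. x \<in> I}. ennreal (avg M I \<phi>))"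

definition ennreal_powr :: "ennreal \<Rightarrow> real \<Rightarrow> ennreal" where
  "ennreal_powr x p = (if x = \<top> then \<top> else ennreal (enn2real x powr p))"

definition rearr :: "'a measure \<Rightarrow> ('a \<Rightarrow> real) \<Rightarrow> real \<Rightarrow> real" where
  "rearr M \<phi> t = Inf {s. s \<ge> 0 \<and> measure M {x\<in>space M. \<phi> x > s} < t}"

definition H_fun :: "real \<Rightarrow> real \<Rightarrow> real" where
  "H_fun p z = p * z powr (p - 1) - (p - 1) * z powr p"

definition omega :: "real \<Rightarrow> real \<Rightarrow> real" where
  "omega p y = (THE z. z \<in> {1..p / (p - 1)} \<and> H_fun p z = y)"

end

theory Submission
  imports Defs
begin


lemma layer_cake:
  fixes f :: "'a \<Rightarrow> real"
  assumes sf: "sigma_finite_measure M" and fm[measurable]: "f \<in> borel_measurable M"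
    and nn: "\<And>x. x \<in> space M \<Longrightarrow> 0 \<le> f x"
  shows "(\<integral>\<^sup>+x. ennreal (f x) \<partial>M) =
    (\<integral>\<^sup>+s. indicator {0<..} s * emeasure M {x\<in>space M. s < f x} \<partial>lborel)"
proof -
  interpret pair_sigma_finite M lborel
    using sf by (simp add: pair_sigma_finite_def lborel.sigma_finite_measure_axioms)
  have pt: "ennreal (f x) = (\<integral>\<^sup>+s. indicator {0<..} s * indicator {..<f x} s \<partial>lborel)"
    if "x \<in> space M" for x
  proof -
    have "(\<lambda>s. indicator {0<..} s * indicator {..<f x} s :: ennreal) = indicator {0<..<f x}"
      by (auto simp: indicator_def fun_eq_iff)
    then show ?thesis using nn[OF that] by simp
  qed
  have "(\<integral>\<^sup>+x. ennreal (f x) \<partial>M) =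
     (\<integral>\<^sup>+x. (\<integral>\<^sup>+s. indicator {0<..} s * indicator {..<f x} s \<partial>lborel) \<partial>M)"
    by (rule nn_integral_cong) (simp add: pt)
  also have "\<dots> = (\<integral>\<^sup>+s. (\<integral>\<^sup>+x. indicator {0<..} s * indicator {..<f x} s \<partial>M) \<partial>lborel)"
    apply (rule Fubini'[symmetric])
    apply measurable
    apply (simp only: lessThan_iff)
    apply measurable
    done
  also have "\<dots> = (\<integral>\<^sup>+s. indicator {0<..} s * emeasure M {x\<in>space M. s < f x} \<partial>lborel)"
  proof (rule nn_integral_cong)
    fix s :: real
    have "(\<integral>\<^sup>+x. indicator {0<..} s * indicator {..<f x} s \<partial>M) =
        (\<integral>\<^sup>+x. indicator {0<..} s * indicator {x\<in>space M. s < f x} x \<partial>M)"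
      by (rule nn_integral_cong) (auto simp: indicator_def)
    also have "\<dots> = indicator {0<..} s * emeasure M {x\<in>space M. s < f x}"
      by (subst nn_integral_cmult) auto
    finally show "(\<integral>\<^sup>+x. indicator {0<..} s * indicator {..<f x} s \<partial>M) =
        indicator {0<..} s * emeasure M {x\<in>space M. s < f x}" .
  qed
  finally show ?thesis .
qed



lemma powr_less_iff_root:
  fixes s y p :: real
  assumes "s > 0" "y \<ge> 0" "p > 0"
  shows "s < y powr p \<longleftrightarrow> s powr (1/p) < y"
proof
  assume "s < y powr p"
  then have "s powr (1/p) < (y powr p) powr (1/p)"
    using assms by (intro powr_less_mono2) auto
  then show "s powr (1/p) < y" using assms by (simp add: powr_powr)
next
  assume "s powr (1/p) < y"
  then have "(s powr (1/p)) powr p < y powr p"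
    using assms by (intro powr_less_mono2) auto
  then show "s < y powr p" using assms by (simp add: powr_powr)
qed

lemma dist_compare:
  fixes f1 :: "'a \<Rightarrow> real" and f2 :: "'b \<Rightarrow> real" and p :: real
  assumes "sigma_finite_measure M1" "sigma_finite_measure M2"
    and [measurable]: "f1 \<in> borel_measurable M1" "f2 \<in> borel_measurable M2"
    and nn1: "\<And>x. x \<in> space M1 \<Longrightarrow> 0 \<le> f1 x" and nn2: "\<And>x. x \<in> space M2 \<Longrightarrow> 0 \<le> f2 x"
    and p: "p > 0"
    and le: "\<And>s. s > 0 \<Longrightarrow> emeasure M1 {x\<in>space M1. s < f1 x} \<le> emeasure M2 {x\<in>space M2. s < f2 x}"
  shows "(\<integral>\<^sup>+x. ennreal (f1 x powr p) \<partial>M1) \<le> (\<integral>\<^sup>+x. ennreal (f2 x powr p) \<partial>M2)"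
proof -
  have "(\<integral>\<^sup>+x. ennreal (f1 x powr p) \<partial>M1) =
    (\<integral>\<^sup>+s. indicator {0<..} s * emeasure M1 {x\<in>space M1. s < f1 x powr p} \<partial>lborel)"
    by (rule layer_cake) (use assms in auto)
  also have "\<dots> \<le> (\<integral>\<^sup>+s. indicator {0<..} s * emeasure M2 {x\<in>space M2. s < f2 x powr p} \<partial>lborel)"
  proof (rule nn_integral_mono)
    fix s :: real
    show "indicator {0<..} s * emeasure M1 {x\<in>space M1. s < f1 x powr p}
       \<le> indicator {0<..} s * emeasure M2 {x\<in>space M2. s < f2 x powr p}"
    proof (cases "s > 0")
      case True
      have e1: "{x\<in>space M1. s < f1 x powr p} = {x\<in>space M1. s powr (1/p) < f1 x}"
        using powr_less_iff_root[OF True _ p] nn1 by auto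
      have e2: "{x\<in>space M2. s < f2 x powr p} = {x\<in>space M2. s powr (1/p) < f2 x}"
        using powr_less_iff_root[OF True _ p] nn2 by auto
      show ?thesis unfolding e1 e2
        using le[of "s powr (1/p)"] True by (intro mult_left_mono) auto
    qed auto
  qed
  also have "\<dots> = (\<integral>\<^sup>+x. ennreal (f2 x powr p) \<partial>M2)"
    by (rule layer_cake[symmetric]) (use assms in auto)
  finally show ?thesis .
qed



definition rr :: "(real \<Rightarrow> real) \<Rightarrow> real \<Rightarrow> real" where
  "rr D t = Inf {s. 0 \<le> s \<and> D s < t}"

locale distfun =
  fixes D :: "real \<Rightarrow> real"
  assumes D_mono: "\<And>s s'. 0 \<le> s \<Longrightarrow> s \<le> s' \<Longrightarrow> D s' \<le> D s"
    and D_nn: "\<And>s. 0 \<le> D s"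
    and D_rc: "\<And>s. 0 \<le> s \<Longrightarrow> (\<lambda>n. D (s + 1 / real (Suc n))) \<longlonglongrightarrow> D s"
    and D_lim: "\<And>t. t > 0 \<Longrightarrow> \<exists>s\<ge>0. D s < t"
begin

lemma S_ne: "t > 0 \<Longrightarrow> {s. 0 \<le> s \<and> D s < t} \<noteq> {}"
  using D_lim by auto

lemma S_bdd: "bdd_below {s. 0 \<le> s \<and> D s < t}"
  by (rule bdd_belowI[of _ 0]) auto

lemma rr_nn: "t > 0 \<Longrightarrow> 0 \<le> rr D t"
  unfolding rr_def using S_ne by (intro cInf_greatest) auto

lemma rr_mono: "0 < t \<Longrightarrow> t \<le> t' \<Longrightarrow> rr D t' \<le> rr D t"
  unfolding rr_def using S_ne S_bdd by (intro cInf_superset_mono) auto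

lemma rr_gt_iff:
  assumes t: "t > 0" and s: "0 \<le> s"
  shows "s < rr D t \<longleftrightarrow> (\<exists>s'>s. t \<le> D s')"
proof
  assume "s < rr D t"
  define s' where "s' = (s + rr D t) / 2"
  have "s' > s" "s' < rr D t" using \<open>s < rr D t\<close> by (auto simp: s'_def)
  have "t \<le> D s'"
  proof (rule ccontr)
    assume "\<not> t \<le> D s'"
    then have "s' \<in> {s. 0 \<le> s \<and> D s < t}" using \<open>s' > s\<close> s by auto
    then have "rr D t \<le> s'" unfolding rr_def using S_bdd by (rule cInf_lower)
    then show False using \<open>s' < rr D t\<close> by simp
  qed
  then show "\<exists>s'>s. t \<le> D s'" using \<open>s' > s\<close> by auto
next
  assume "\<exists>s'>s. t \<le> D s'"
  then obtain s' where s': "s' > s" "t \<le> D s'" by auto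
  have "s' \<le> rr D t" unfolding rr_def
  proof (rule cInf_greatest)
    show "{s. 0 \<le> s \<and> D s < t} \<noteq> {}" using S_ne t by auto
    fix x assume "x \<in> {s. 0 \<le> s \<and> D s < t}"
    then have x: "0 \<le> x" "D x < t" by auto
    show "s' \<le> x"
    proof (rule ccontr)
      assume "\<not> s' \<le> x"
      then have "D s' \<le> D x" using x by (intro D_mono) auto
      then show False using x s' by simp
    qed
  qed
  then show "s < rr D t" using s' by simp
qed

lemma rr_dist:
  assumes c: "c > 0" and s: "0 \<le> s"
  shows "emeasure lborel {t\<in>{0<..<c}. s < rr D t} = ennreal (min c (D s))"
proof -
  define A where "A n = {0<..<c} \<inter> {0<..D (s + 1 / real (Suc n))}" for n
  have eqU: "{t\<in>{0<..<c}. s < rr D t} = (\<Union>n. A n)"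
  proof (intro set_eqI iffI)
    fix t assume "t \<in> {t\<in>{0<..<c}. s < rr D t}"
    then have t: "0 < t" "t < c" "s < rr D t" by auto
    then obtain s' where s': "s' > s" "t \<le> D s'" using rr_gt_iff[OF t(1) s] by auto
    obtain n where n: "inverse (real (Suc n)) < s' - s" using reals_Archimedean[of "s' - s"] s' by auto
    have "D s' \<le> D (s + 1 / real (Suc n))"
      using n s by (intro D_mono) (auto simp: field_simps)
    then have "t \<in> A n" using t s' by (auto simp: A_def)
    then show "t \<in> (\<Union>n. A n)" by auto
  next
    fix t assume "t \<in> (\<Union>n. A n)"
    then obtain n where "t \<in> A n" by auto
    then have t: "0 < t" "t < c" "t \<le> D (s + 1 / real (Suc n))" by (auto simp: A_def)
    have "s < rr D t"
      using rr_gt_iff[OF t(1) s] t(3) by (intro iffD2[OF rr_gt_iff[OF t(1) s]]) (auto intro!: exI[of _ "s + 1 / real (Suc n)"])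
    then show "t \<in> {t\<in>{0<..<c}. s < rr D t}" using t by auto
  qed
  have Dinc: "D (s + 1 / real (Suc m)) \<le> D (s + 1 / real (Suc n))" if "m \<le> n" for m n
    using that s by (intro D_mono) (auto simp: field_simps)
  have inc: "incseq A"
  proof (rule incseq_SucI)
    fix n show "A n \<subseteq> A (Suc n)"
      using Dinc[of n "Suc n"] by (auto simp: A_def simp del: of_nat_Suc)
  qed
  have emA: "emeasure lborel (A n) = ennreal (min c (D (s + 1 / real (Suc n))))" for n
  proof (cases "c \<le> D (s + 1 / real (Suc n))")
    case True
    then have "A n = {0<..<c}" by (auto simp: A_def)
    then show ?thesis using True c by simp
  next
    case False
    then have "A n = {0<..D (s + 1 / real (Suc n))}" by (auto simp: A_def)
    then show ?thesis using False D_nn[of "s + 1 / real (Suc n)"] by simp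
  qed
  have "(\<lambda>n. emeasure lborel (A n)) \<longlonglongrightarrow> emeasure lborel (\<Union>n. A n)"
    by (rule Lim_emeasure_incseq[OF _ inc]) (auto simp: A_def)
  moreover have "(\<lambda>n. emeasure lborel (A n)) \<longlonglongrightarrow> ennreal (min c (D s))"
    unfolding emA by (intro tendsto_ennrealI tendsto_min tendsto_const D_rc s)
  ultimately show ?thesis unfolding eqU by (rule LIMSEQ_unique)
qed

lemma rr_meas:
  assumes c: "c > 0"
  shows "(\<lambda>t. indicator {0<..<c} t * rr D t) \<in> borel_measurable borel"
proof -
  have "mono_on {0<..<c} (\<lambda>t. - rr D t)"
    by (rule mono_onI) (auto intro: rr_mono)
  then have "(\<lambda>t. - rr D t) \<in> borel_measurable (restrict_space borel {0<..<c})"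
    by (rule borel_measurable_mono_on_fnc)
  then have "(\<lambda>t. - (- rr D t)) \<in> borel_measurable (restrict_space borel {0<..<c})"
    by measurable
  then have "(\<lambda>t. indicator {0<..<c} t *\<^sub>R rr D t) \<in> borel_measurable borel"
    by (subst borel_measurable_restrict_space_iff[symmetric]) auto
  then show ?thesis by simp
qed

end



lemma young_p:
  fixes x w p :: real
  assumes x: "x \<ge> 0" and w: "w \<ge> 0" and p: "p > 1"
  shows "x * w powr (p - 1) \<le> x powr p / p + (p - 1) / p * w powr p"
proof -
  have p0: "p - 1 > 0" using p by simp
  have q1: "p / (p - 1) > 1" using p0 by simp
  have q2: "1 / p + 1 / (p / (p - 1)) = 1"
    using p0 p by (simp add: field_simps)
  have "x * w powr (p - 1) \<le> x powr p / p + (w powr (p - 1)) powr (p / (p - 1)) / (p / (p - 1))"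
    by (rule Youngs_inequality[OF p q1 q2 x]) simp
  also have "(w powr (p - 1)) powr (p / (p - 1)) = w powr ((p - 1) * (p / (p - 1)))"
    by (rule powr_powr)
  also have "(p - 1) * (p / (p - 1)) = p" using p0 by simp
  also have "w powr p / (p / (p - 1)) = (p - 1) / p * w powr p"
    by (simp add: divide_divide_eq_right mult.commute)
  finally show ?thesis .
qed

lemma H_le_1:
  assumes "z \<ge> 0" "p > 1"
  shows "H_fun p z \<le> 1"
proof -
  have "1 * z powr (p - 1) \<le> 1 powr p / p + (p - 1) / p * z powr p"
    by (rule young_p) (use assms in auto)
  then have "z powr (p - 1) \<le> 1 / p + (p - 1) / p * z powr p"
    by simp
  then have "p * z powr (p - 1) \<le> p * (1 / p + (p - 1) / p * z powr p)"
    using assms by (intro mult_left_mono) auto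
  also have "p * (1 / p + (p - 1) / p * z powr p) = 1 + (p - 1) * z powr p"
    using assms by (simp add: distrib_left)
  finally show ?thesis by (simp add: H_fun_def)
qed

lemma H_cont: "p > 1 \<Longrightarrow> continuous_on {a..b} (H_fun p)" if "a > 0" for a b
  unfolding H_fun_def using that by (intro continuous_intros) auto

lemma H_strict_dec:
  assumes p: "p > 1" and z: "1 \<le> z1" "z1 < z2"
  shows "H_fun p z2 < H_fun p z1"
proof -
  have "H_fun p z1 > H_fun p z2"
  proof (rule DERIV_neg_imp_decreasing_open[OF z(2)])
    fix x assume x: "z1 < x" "x < z2"
    then have x1: "x > 1" using z by simp
    have "DERIV (H_fun p) x :> p * ((p - 1) * x powr (p - 1 - 1)) - (p - 1) * (p * x powr (p - 1))"
      unfolding H_fun_def[abs_def] using x1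
      by (auto intro!: derivative_eq_intros)
    moreover have "p * ((p - 1) * x powr (p - 1 - 1)) - (p - 1) * (p * x powr (p - 1)) < 0"
    proof -
      have "x powr (p - 1 - 1) < x powr (p - 1)" using x1 by (intro powr_less_mono) auto
      then have "p * (p - 1) * x powr (p - 1 - 1) < p * (p - 1) * x powr (p - 1)"
        using p by (intro mult_strict_left_mono) auto
      moreover have "p * ((p - 1) * x powr (p - 1 - 1)) - (p - 1) * (p * x powr (p - 1))
          = p * (p - 1) * x powr (p - 1 - 1) - p * (p - 1) * x powr (p - 1)"
        by (simp add: algebra_simps)
      ultimately show ?thesis by linarith
    qed
    ultimately show "\<exists>y. DERIV (H_fun p) x :> y \<and> y < 0" by blast
  next
    show "continuous_on {z1..z2} (H_fun p)" using z p by (intro H_cont) auto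
  qed
  then show ?thesis by simp
qed

lemma H_one: "H_fun p 1 = 1"
  by (simp add: H_fun_def)

lemma H_top: assumes "p > 1" shows "H_fun p (p / (p - 1)) = 0"
proof -
  define q where "q = p / (p - 1)"
  have pos: "q > 0" using assms by (simp add: q_def)
  have "q powr p = q powr ((p - 1) + 1)" by simp
  also have "\<dots> = q powr (p - 1) * q powr 1" by (rule powr_add)
  also have "\<dots> = q powr (p - 1) * q" using pos by simp
  finally have e1: "q powr p = q powr (p - 1) * q" .
  have e2: "(p - 1) * q = p" using assms by (simp add: q_def)
  have "H_fun p q = p * q powr (p - 1) - (p - 1) * (q powr (p - 1) * q)"
    unfolding H_fun_def e1 ..
  also have "(p - 1) * (q powr (p - 1) * q) = q powr (p - 1) * ((p - 1) * q)"
    by (simp only: ac_simps)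
  also have "\<dots> = q powr (p - 1) * p" unfolding e2 ..
  finally show ?thesis unfolding q_def by simp
qed

lemma omega_props:
  assumes p: "p > 1" and y: "0 \<le> y" "y \<le> 1"
  shows "omega p y \<in> {1..p / (p - 1)} \<and> H_fun p (omega p y) = y"
proof -
  have le: "1 \<le> p / (p - 1)" using p by (simp add: field_simps)
  have "\<exists>x. 1 \<le> x \<and> x \<le> p / (p - 1) \<and> H_fun p x = y"
  proof (rule IVT2')
    show "H_fun p (p / (p - 1)) \<le> y" using H_top[OF p] y by simp
    show "y \<le> H_fun p 1" using H_one[of p] y by simp
    show "1 \<le> p / (p - 1)" by (rule le)
    show "continuous_on {1..p / (p - 1)} (H_fun p)" using p by (intro H_cont) auto
  qed
  then obtain z where z: "1 \<le> z" "z \<le> p / (p - 1)" "H_fun p z = y" by blast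
  have uniq: "w = z" if "w \<in> {1..p / (p - 1)} \<and> H_fun p w = y" for w
  proof (rule ccontr)
    assume "w \<noteq> z"
    then consider "w < z" | "z < w" by linarith
    then show False
    proof cases
      case 1 then show False using H_strict_dec[OF p, of w z] that z by simp
    next
      case 2 then show False using H_strict_dec[OF p, of z w] that z by simp
    qed
  qed
  have zin: "z \<in> {1..p / (p - 1)} \<and> H_fun p z = y"
    using z by (simp only: atLeastAtMost_iff)
  have "omega p y = z"
    unfolding omega_def
  proof (rule the_equality)
    show "z \<in> {1..p / (p - 1)} \<and> H_fun p z = y" by (rule zin)
    show "\<And>w. w \<in> {1..p / (p - 1)} \<and> H_fun p w = y \<Longrightarrow> w = z" by (rule uniq)
  qed
  then show ?thesis using zin by (simp only:)
qed

lemma le_omega: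
  assumes p: "p > 1" and z: "z \<ge> 0" and y: "0 \<le> y" and H: "y \<le> H_fun p z"
  shows "z \<le> omega p y"
proof -
  have y1: "y \<le> 1" using H H_le_1[OF z p] by simp
  note om = omega_props[OF p y y1]
  show ?thesis
  proof (rule ccontr)
    assume "\<not> z \<le> omega p y"
    moreover have "1 \<le> omega p y" using om by (simp only: atLeastAtMost_iff)
    ultimately have "H_fun p z < H_fun p (omega p y)"
      by (intro H_strict_dec[OF p]) auto
    then show False using om H by linarith
  qed
qed



lemma ftc_layer:
  fixes a w q :: real
  assumes a: "a > 0" and w: "w \<ge> a" and q: "q > 0"
  shows "(\<integral>\<^sup>+l. ennreal (q * l powr (q - 1)) * indicator {a<..<w} l \<partial>lborel) = ennreal (w powr q - a powr q)"
proof -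
  have "(\<integral>\<^sup>+l. ennreal (q * l powr (q - 1)) * indicator {a<..<w} l \<partial>lborel) =
        (\<integral>\<^sup>+l. ennreal (q * l powr (q - 1)) * indicator {a..w} l \<partial>lborel)"
  proof (rule nn_integral_cong_AE)
    show "AE l in lborel. ennreal (q * l powr (q - 1)) * indicator {a<..<w} l =
        ennreal (q * l powr (q - 1)) * indicator {a..w} l"
      using AE_lborel_singleton[of a] AE_lborel_singleton[of w]
      by eventually_elim (auto simp: indicator_def)
  qed
  also have "\<dots> = ennreal (w powr q - a powr q)"
  proof (rule nn_integral_FTC_Icc[where F = "\<lambda>x. x powr q"])
    show "(\<lambda>l. q * l powr (q - 1)) \<in> borel_measurable borel" by measurable
    show "a \<le> w" by (rule w)
    fix x assume x: "x \<in> {a..w}"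
    then have "x > 0" using a by auto
    then show "((\<lambda>x. x powr q) has_real_derivative q * x powr (q - 1)) (at x)"
      by (auto intro!: derivative_eq_intros)
    show "0 \<le> q * x powr (q - 1)" using q by simp
  qed
  finally show ?thesis .
qed


lemma young_c:
  fixes x w p c :: real
  assumes x: "x \<ge> 0" and w: "w \<ge> 0" and p: "p > 1" and c: "c > 0"
  shows "x * w powr (p - 1) \<le> x powr p / (p * c powr (p - 1)) + (p - 1) / p * c * w powr p"
proof -
  define x' where "x' = x / c powr ((p - 1) / p)"
  define w' where "w' = c powr (1 / p) * w"
  have x': "x' \<ge> 0" using x c by (simp add: x'_def)
  have w': "w' \<ge> 0" using w c by (simp add: w'_def)
  have e1: "w' powr (p - 1) = c powr ((p - 1) / p) * w powr (p - 1)"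
    unfolding w'_def using c w by (simp add: powr_mult powr_powr)
  have e2: "x' * c powr ((p - 1) / p) = x"
    unfolding x'_def using c by simp
  have e3: "x' powr p = x powr p / c powr (p - 1)"
    unfolding x'_def using c x p by (simp add: powr_divide powr_powr)
  have e4: "w' powr p = c * w powr p"
    unfolding w'_def using c w p by (simp add: powr_mult powr_powr)
  have "x * w powr (p - 1) = x' * w' powr (p - 1)"
    unfolding e1 e2[symmetric] by (simp only: ac_simps)
  also have "\<dots> \<le> x' powr p / p + (p - 1) / p * w' powr p"
    by (rule young_p[OF x' w' p])
  also have "\<dots> = x powr p / (p * c powr (p - 1)) + (p - 1) / p * c * w powr p"
    unfolding e3 e4 by (simp add: mult.commute)
  finally show ?thesis .
qed

lemma final_alg:
  fixes V Gp A p :: real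
  assumes p: "p > 1" and A: "A > 0" and VA: "V \<ge> A" and Gp: "Gp \<ge> 0"
    and ineq: "\<And>c. c > 0 \<Longrightarrow> V \<le> Gp / ((p - 1) * c powr (p - 1)) + c * V - A / (p - 1)"
  shows "Gp > 0" "V \<le> Gp * omega p (A / Gp) powr p"
proof -
  have p1: "p - 1 > 0" using p by simp
  have V: "V > 0" using A VA by simp
  show Gpos: "Gp > 0"
  proof (rule ccontr)
    assume "\<not> Gp > 0"
    then have "Gp = 0" using Gp by simp
    then have "V \<le> (1/2) * V - A / (p - 1)" using ineq[of "1/2"] by simp
    moreover have "A / (p - 1) > 0" using A p1 by simp
    ultimately show False using V by simp
  qed
  define z where "z = (V / Gp) powr (1 / p)"
  have z: "z > 0" using V Gpos by (simp add: z_def)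
  have zp: "z powr p = V / Gp" using V Gpos p by (simp add: z_def powr_powr)
  have zp1: "z powr p = z powr (p - 1) * z"
  proof -
    have "z powr p = z powr ((p - 1) + 1)" by simp
    also have "\<dots> = z powr (p - 1) * z powr 1" by (rule powr_add)
    finally show ?thesis using z by simp
  qed
  have Vz: "V = Gp * z powr p" using zp Gpos by simp
  have "V \<le> Gp / ((p - 1) * (1 / z) powr (p - 1)) + (1 / z) * V - A / (p - 1)"
    using ineq[of "1 / z"] z by simp
  also have "(1 / z) powr (p - 1) = 1 / z powr (p - 1)" using z by (simp add: powr_divide)
  also have "(1 / z) * V = Gp * z powr (p - 1)" using z unfolding Vz zp1 by simp
  finally have "Gp * z powr p \<le> Gp * z powr (p - 1) / (p - 1) + Gp * z powr (p - 1) - A / (p - 1)"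
    using Vz by simp
  then have "(p - 1) * (Gp * z powr p) \<le> (p - 1) * (Gp * z powr (p - 1) / (p - 1) + Gp * z powr (p - 1) - A / (p - 1))"
    using p1 by (intro mult_left_mono) auto
  also have "\<dots> = (p - 1) * (Gp * z powr (p - 1) / (p - 1)) + (p - 1) * (Gp * z powr (p - 1)) - (p - 1) * (A / (p - 1))"
    by (simp only: distrib_left right_diff_distrib)
  also have "(p - 1) * (Gp * z powr (p - 1) / (p - 1)) = Gp * z powr (p - 1)" using p1 by simp
  also have "(p - 1) * (A / (p - 1)) = A" using p1 by simp
  also have "Gp * z powr (p - 1) + (p - 1) * (Gp * z powr (p - 1)) - A = Gp * (p * z powr (p - 1)) - A"
    by (simp add: algebra_simps)
  finally have "A \<le> Gp * (p * z powr (p - 1) - (p - 1) * z powr p)"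
    by (simp add: algebra_simps)
  then have "A / Gp \<le> H_fun p z"
    using Gpos by (simp add: H_fun_def divide_le_eq mult.commute)
  then have "z \<le> omega p (A / Gp)"
    using A Gpos z p by (intro le_omega) auto
  then have "z powr p \<le> omega p (A / Gp) powr p"
    using z p by (intro powr_mono2) auto
  then show "V \<le> Gp * omega p (A / Gp) powr p"
    unfolding Vz using Gpos by (intro mult_left_mono) auto
qed



lemma core:
  fixes g u :: "real \<Rightarrow> real" and k p N :: real
  defines "\<Omega> \<equiv> {0<..<k}"
  assumes k: "k > 0" and p: "p > 1"
    and gm[measurable]: "g \<in> borel_measurable borel" and um[measurable]: "u \<in> borel_measurable borel"
    and g_nn: "\<And>t. 0 \<le> g t" and u_nn: "\<And>t. 0 \<le> u t" and u_bd: "\<And>t. u t \<le> N"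
    and gp_int: "integrable lborel (\<lambda>t. g t powr p * indicator \<Omega> t)"
    and g_int: "integrable lborel (\<lambda>t. g t * indicator \<Omega> t)"
    and Gpos: "0 < (\<integral>t. g t * indicator \<Omega> t \<partial>lborel)"
    and hyp: "\<And>l. l > 0 \<Longrightarrow> ennreal l * emeasure lborel {t\<in>\<Omega>. l < u t}
        \<le> (\<integral>\<^sup>+t. ennreal (g t) * indicator {t\<in>\<Omega>. l < u t} t \<partial>lborel)"
  shows "(\<integral>\<^sup>+t. ennreal (u t powr p) * indicator \<Omega> t \<partial>lborel) \<le>
     ennreal ((\<integral>t. g t powr p * indicator \<Omega> t \<partial>lborel) *
       omega p ((\<integral>t. g t * indicator \<Omega> t \<partial>lborel) powr p /
         (k powr (p - 1) * (\<integral>t. g t powr p * indicator \<Omega> t \<partial>lborel))) powr p)"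
proof -
  define G where "G = (\<integral>t. g t * indicator \<Omega> t \<partial>lborel)"
  define Gp where "Gp = (\<integral>t. g t powr p * indicator \<Omega> t \<partial>lborel)"
  define a where "a = G / k"
  define v where "v t = max (u t) a" for t
  define B where "B = max N a"
  have Gpos': "G > 0" using Gpos by (simp add: G_def)
  have a: "a > 0" using Gpos' k by (simp add: a_def)
  have p1: "p - 1 > 0" using p by simp
  have Gak: "G = a * k" using k by (simp add: a_def)
  have Om[measurable]: "\<Omega> \<in> sets borel" by (simp add: \<Omega>_def)
  have emOm: "emeasure lborel \<Omega> = ennreal k" using k by (simp add: \<Omega>_def)
  have vm[measurable]: "v \<in> borel_measurable borel" unfolding v_def by measurable
  have v_ge: "a \<le> v t" for t by (simp add: v_def)
  have v_nn: "0 \<le> v t" for t using v_ge[of t] a by simp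
  have v_le: "v t \<le> B" for t using u_bd[of t] by (simp add: v_def B_def)
  have u_le_v: "u t \<le> v t" for t by (simp add: v_def)
  have B: "B \<ge> 0" using a by (simp add: B_def)

  have vp_int: "integrable lborel (\<lambda>t. v t powr p * indicator \<Omega> t)"
  proof (rule integrableI_nonneg)
    show "(\<lambda>t. v t powr p * indicator \<Omega> t) \<in> borel_measurable lborel" by measurable
    show "AE x in lborel. 0 \<le> v x powr p * indicator \<Omega> x" by simp
    have "(\<integral>\<^sup>+t. ennreal (v t powr p * indicator \<Omega> t) \<partial>lborel) \<le> (\<integral>\<^sup>+t. ennreal (B powr p) * indicator \<Omega> t \<partial>lborel)"
      by (intro nn_integral_mono) (use p in \<open>auto simp: indicator_def intro!: powr_mono2 v_le v_nn\<close>)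
    also have "\<dots> = ennreal (B powr p) * ennreal k" by (subst nn_integral_cmult_indicator) (auto simp: emOm)
    also have "\<dots> < \<infinity>" by (simp add: ennreal_mult_less_top)
    finally show "(\<integral>\<^sup>+t. ennreal (v t powr p * indicator \<Omega> t) \<partial>lborel) < \<infinity>" .
  qed
  define V where "V = (\<integral>t. v t powr p * indicator \<Omega> t \<partial>lborel)"
  have eV: "(\<integral>\<^sup>+t. ennreal (v t powr p) * indicator \<Omega> t \<partial>lborel) = ennreal V"
  proof -
    have "(\<integral>\<^sup>+t. ennreal (v t powr p) * indicator \<Omega> t \<partial>lborel) = (\<integral>\<^sup>+t. ennreal (v t powr p * indicator \<Omega> t) \<partial>lborel)"
      by (intro nn_integral_cong) (simp add: indicator_def)
    also have "\<dots> = ennreal V" unfolding V_def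
      by (rule nn_integral_eq_integral[OF vp_int]) simp
    finally show ?thesis .
  qed

  have stepA: "(\<integral>\<^sup>+t. ennreal (u t powr p) * indicator \<Omega> t \<partial>lborel) \<le> (\<integral>\<^sup>+t. ennreal (v t powr p) * indicator \<Omega> t \<partial>lborel)"
    by (intro nn_integral_mono mult_right_mono ennreal_leI powr_mono2) (use p in \<open>auto intro: u_nn u_le_v\<close>)

  have stepB: "(\<integral>\<^sup>+t. ennreal (v t powr p) * indicator \<Omega> t \<partial>lborel) =
      ennreal (a powr p * k) + (\<integral>\<^sup>+t. ennreal (v t powr p - a powr p) * indicator \<Omega> t \<partial>lborel)"
  proof -
    have "(\<integral>\<^sup>+t. ennreal (v t powr p) * indicator \<Omega> t \<partial>lborel) =
        (\<integral>\<^sup>+t. ennreal (a powr p) * indicator \<Omega> t + ennreal (v t powr p - a powr p) * indicator \<Omega> t \<partial>lborel)"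
    proof (intro nn_integral_cong)
      fix t
      have "a powr p \<le> v t powr p" using a p v_ge by (intro powr_mono2) auto
      then have "ennreal (v t powr p) = ennreal (a powr p) + ennreal (v t powr p - a powr p)"
        by (subst ennreal_plus[symmetric]) auto
      then show "ennreal (v t powr p) * indicator \<Omega> t = ennreal (a powr p) * indicator \<Omega> t + ennreal (v t powr p - a powr p) * indicator \<Omega> t"
        by (simp add: distrib_right)
    qed
    also have "\<dots> = (\<integral>\<^sup>+t. ennreal (a powr p) * indicator \<Omega> t \<partial>lborel) + (\<integral>\<^sup>+t. ennreal (v t powr p - a powr p) * indicator \<Omega> t \<partial>lborel)"
      by (rule nn_integral_add) auto
    also have "(\<integral>\<^sup>+t. ennreal (a powr p) * indicator \<Omega> t \<partial>lborel) = ennreal (a powr p * k)"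
      using k by (subst nn_integral_cmult_indicator) (auto simp: emOm ennreal_mult)
    finally show ?thesis .
  qed
  have VA: "V \<ge> a powr p * k"
  proof -
    have "ennreal (a powr p * k) \<le> ennreal V" using stepB eV by (metis le_iff_add)
    then show ?thesis using a k by (subst (asm) ennreal_le_iff) (auto simp: V_def)
  qed

  have stepB3: "(\<integral>\<^sup>+t. ennreal (v t powr p - a powr p) * indicator \<Omega> t \<partial>lborel) =
      (\<integral>\<^sup>+l. ennreal (p * l powr (p - 1)) * indicator {a<..} l * emeasure lborel {t\<in>\<Omega>. l < u t} \<partial>lborel)"
  proof -
    have "(\<integral>\<^sup>+t. ennreal (v t powr p - a powr p) * indicator \<Omega> t \<partial>lborel) =
       (\<integral>\<^sup>+t. (\<integral>\<^sup>+l. ennreal (p * l powr (p - 1)) * indicator {a<..<v t} l \<partial>lborel) * indicator \<Omega> t \<partial>lborel)"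
    proof (intro nn_integral_cong)
      fix t
      have p0: "p > 0" using p by simp
      show "ennreal (v t powr p - a powr p) * indicator \<Omega> t =
       (\<integral>\<^sup>+l. ennreal (p * l powr (p - 1)) * indicator {a<..<v t} l \<partial>lborel) * indicator \<Omega> t"
        using ftc_layer[OF a v_ge[of t] p0] by simp
    qed
    also have "\<dots> = (\<integral>\<^sup>+t. (\<integral>\<^sup>+l. ennreal (p * l powr (p - 1)) * indicator {a<..<v t} l * indicator \<Omega> t \<partial>lborel) \<partial>lborel)"
    proof (intro nn_integral_cong)
      fix t
      show "(\<integral>\<^sup>+l. ennreal (p * l powr (p - 1)) * indicator {a<..<v t} l \<partial>lborel) * indicator \<Omega> t =
          (\<integral>\<^sup>+l. ennreal (p * l powr (p - 1)) * indicator {a<..<v t} l * indicator \<Omega> t \<partial>lborel)"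
        by (rule nn_integral_multc[symmetric]) measurable
    qed
    also have "\<dots> = (\<integral>\<^sup>+l. (\<integral>\<^sup>+t. ennreal (p * l powr (p - 1)) * indicator {a<..<v t} l * indicator \<Omega> t \<partial>lborel) \<partial>lborel)"
      apply (rule lborel_pair.Fubini'[symmetric])
      apply measurable
      apply (simp only: greaterThanLessThan_iff)
      apply measurable
      done
    also have "\<dots> = (\<integral>\<^sup>+l. ennreal (p * l powr (p - 1)) * indicator {a<..} l * emeasure lborel {t\<in>\<Omega>. l < u t} \<partial>lborel)"
    proof (intro nn_integral_cong)
      fix l :: real
      have "(\<integral>\<^sup>+t. ennreal (p * l powr (p - 1)) * indicator {a<..<v t} l * indicator \<Omega> t \<partial>lborel) =
          (\<integral>\<^sup>+t. (ennreal (p * l powr (p - 1)) * indicator {a<..} l) * indicator {t\<in>\<Omega>. l < u t} t \<partial>lborel)"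
        by (intro nn_integral_cong) (auto simp: indicator_def v_def)
      also have "\<dots> = (ennreal (p * l powr (p - 1)) * indicator {a<..} l) * emeasure lborel {t\<in>\<Omega>. l < u t}"
        by (rule nn_integral_cmult_indicator) measurable
      finally show "(\<integral>\<^sup>+t. ennreal (p * l powr (p - 1)) * indicator {a<..<v t} l * indicator \<Omega> t \<partial>lborel) =
          ennreal (p * l powr (p - 1)) * indicator {a<..} l * emeasure lborel {t\<in>\<Omega>. l < u t}" .
    qed
    finally show ?thesis .
  qed

  have stepC: "(\<integral>\<^sup>+l. ennreal (p * l powr (p - 1)) * indicator {a<..} l * emeasure lborel {t\<in>\<Omega>. l < u t} \<partial>lborel) \<le>
      (\<integral>\<^sup>+l. ennreal (p * l powr (p - 1 - 1)) * indicator {a<..} l * (\<integral>\<^sup>+t. ennreal (g t) * indicator {t\<in>\<Omega>. l < u t} t \<partial>lborel) \<partial>lborel)"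
  proof (intro nn_integral_mono)
    fix l :: real
    show "ennreal (p * l powr (p - 1)) * indicator {a<..} l * emeasure lborel {t\<in>\<Omega>. l < u t} \<le>
      ennreal (p * l powr (p - 1 - 1)) * indicator {a<..} l * (\<integral>\<^sup>+t. ennreal (g t) * indicator {t\<in>\<Omega>. l < u t} t \<partial>lborel)"
    proof (cases "a < l")
      case True
      then have l: "l > 0" using a by simp
      have "l powr (p - 1) = l powr ((p - 1 - 1) + 1)" by simp
      also have "\<dots> = l powr (p - 1 - 1) * l powr 1" by (rule powr_add)
      finally have lp: "l powr (p - 1) = l powr (p - 1 - 1) * l" using l by simp
      have "ennreal (p * l powr (p - 1)) = ennreal (p * l powr (p - 1 - 1)) * ennreal l"
        unfolding lp using l p by (subst ennreal_mult[symmetric]) (auto simp: mult.assoc)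
      then have "ennreal (p * l powr (p - 1)) * indicator {a<..} l * emeasure lborel {t\<in>\<Omega>. l < u t}
          = ennreal (p * l powr (p - 1 - 1)) * (ennreal l * emeasure lborel {t\<in>\<Omega>. l < u t})"
        using True by (simp add: mult.assoc)
      also have "\<dots> \<le> ennreal (p * l powr (p - 1 - 1)) * (\<integral>\<^sup>+t. ennreal (g t) * indicator {t\<in>\<Omega>. l < u t} t \<partial>lborel)"
        by (intro mult_left_mono hyp l) simp
      finally show ?thesis using True by simp
    qed simp
  qed

  have stepD: "(\<integral>\<^sup>+l. ennreal (p * l powr (p - 1 - 1)) * indicator {a<..} l * (\<integral>\<^sup>+t. ennreal (g t) * indicator {t\<in>\<Omega>. l < u t} t \<partial>lborel) \<partial>lborel) =
      (\<integral>\<^sup>+t. ennreal (g t * (p / (p - 1)) * (v t powr (p - 1) - a powr (p - 1))) * indicator \<Omega> t \<partial>lborel)"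
  proof -
    let ?c = "\<lambda>l. ennreal (p * l powr (p - 1 - 1))"
    have "(\<integral>\<^sup>+l. ?c l * indicator {a<..} l * (\<integral>\<^sup>+t. ennreal (g t) * indicator {t\<in>\<Omega>. l < u t} t \<partial>lborel) \<partial>lborel) =
        (\<integral>\<^sup>+l. (\<integral>\<^sup>+t. ?c l * indicator {a<..} l * (ennreal (g t) * indicator {t\<in>\<Omega>. l < u t} t) \<partial>lborel) \<partial>lborel)"
    proof (intro nn_integral_cong)
      fix l :: real
      show "?c l * indicator {a<..} l * (\<integral>\<^sup>+t. ennreal (g t) * indicator {t\<in>\<Omega>. l < u t} t \<partial>lborel) =
        (\<integral>\<^sup>+t. ?c l * indicator {a<..} l * (ennreal (g t) * indicator {t\<in>\<Omega>. l < u t} t) \<partial>lborel)"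
        by (rule nn_integral_cmult[symmetric]) measurable
    qed
    also have "\<dots> = (\<integral>\<^sup>+t. (\<integral>\<^sup>+l. ?c l * indicator {a<..} l * (ennreal (g t) * indicator {t\<in>\<Omega>. l < u t} t) \<partial>lborel) \<partial>lborel)"
      by (rule lborel_pair.Fubini') measurable
    also have "\<dots> = (\<integral>\<^sup>+t. ennreal (g t * (p / (p - 1)) * (v t powr (p - 1) - a powr (p - 1))) * indicator \<Omega> t \<partial>lborel)"
    proof (intro nn_integral_cong)
      fix t :: real
      have "(\<integral>\<^sup>+l. ?c l * indicator {a<..} l * (ennreal (g t) * indicator {t\<in>\<Omega>. l < u t} t) \<partial>lborel) =
          (\<integral>\<^sup>+l. (ennreal (g t) * indicator \<Omega> t) * (?c l * indicator {a<..<v t} l) \<partial>lborel)"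
        by (intro nn_integral_cong) (auto simp: indicator_def v_def mult.commute)
      also have "\<dots> = (ennreal (g t) * indicator \<Omega> t) * (\<integral>\<^sup>+l. ?c l * indicator {a<..<v t} l \<partial>lborel)"
        by (rule nn_integral_cmult) measurable
      also have "(\<integral>\<^sup>+l. ?c l * indicator {a<..<v t} l \<partial>lborel) =
          (\<integral>\<^sup>+l. ennreal (p / (p - 1)) * (ennreal ((p - 1) * l powr (p - 1 - 1)) * indicator {a<..<v t} l) \<partial>lborel)"
      proof (intro nn_integral_cong)
        fix l :: real
        have "ennreal (p * l powr (p - 1 - 1)) = ennreal (p / (p - 1)) * ennreal ((p - 1) * l powr (p - 1 - 1))"
          using p1 by (subst ennreal_mult[symmetric]) auto
        then show "?c l * indicator {a<..<v t} l =
          ennreal (p / (p - 1)) * (ennreal ((p - 1) * l powr (p - 1 - 1)) * indicator {a<..<v t} l)"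
          by (simp add: mult.assoc)
      qed
      also have "\<dots> = ennreal (p / (p - 1)) * (\<integral>\<^sup>+l. ennreal ((p - 1) * l powr (p - 1 - 1)) * indicator {a<..<v t} l \<partial>lborel)"
        by (rule nn_integral_cmult) measurable
      also have "(\<integral>\<^sup>+l. ennreal ((p - 1) * l powr (p - 1 - 1)) * indicator {a<..<v t} l \<partial>lborel) =
          ennreal (v t powr (p - 1) - a powr (p - 1))"
        by (rule ftc_layer[OF a v_ge p1])
      also have "ennreal (g t) * indicator \<Omega> t * (ennreal (p / (p - 1)) * ennreal (v t powr (p - 1) - a powr (p - 1))) =
          ennreal (g t * (p / (p - 1)) * (v t powr (p - 1) - a powr (p - 1))) * indicator \<Omega> t"
      proof -
        have "a powr (p - 1) \<le> v t powr (p - 1)" using a p1 v_ge by (intro powr_mono2) auto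
        then have X0: "0 \<le> v t powr (p - 1) - a powr (p - 1)" by simp
        have c0: "0 \<le> p / (p - 1)" using p1 by simp
        have g0: "0 \<le> g t" by (rule g_nn)
        have e: "ennreal (g t * (p / (p - 1)) * (v t powr (p - 1) - a powr (p - 1))) =
          ennreal (g t) * ennreal (p / (p - 1)) * ennreal (v t powr (p - 1) - a powr (p - 1))"
          by (simp only: ennreal_mult[OF mult_nonneg_nonneg[OF g0 c0] X0] ennreal_mult[OF g0 c0])
        show ?thesis unfolding e by (simp only: mult_ac)
      qed
      finally show "(\<integral>\<^sup>+l. ?c l * indicator {a<..} l * (ennreal (g t) * indicator {t\<in>\<Omega>. l < u t} t) \<partial>lborel) =
         ennreal (g t * (p / (p - 1)) * (v t powr (p - 1) - a powr (p - 1))) * indicator \<Omega> t" .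
    qed
    finally show ?thesis .
  qed

  have stepE: "V \<le> Gp / ((p - 1) * c powr (p - 1)) + c * V - a powr p * k / (p - 1)" if c: "c > 0" for c
  proof -
    define C1 where "C1 = 1 / ((p - 1) * c powr (p - 1))"
    define C3 where "C3 = p / (p - 1) * a powr (p - 1)"
    define Y where "Y t = C1 * (g t powr p * indicator \<Omega> t) + c * (v t powr p * indicator \<Omega> t) - C3 * (g t * indicator \<Omega> t)" for t
    have Ypt: "g t * (p / (p - 1)) * (v t powr (p - 1) - a powr (p - 1)) * indicator \<Omega> t \<le> Y t" for t
    proof (cases "t \<in> \<Omega>")
      case True
      have yc: "g t * v t powr (p - 1) \<le> g t powr p / (p * c powr (p - 1)) + (p - 1) / p * c * v t powr p"
        by (rule young_c[OF g_nn v_nn p c])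
      have "p / (p - 1) * (g t * v t powr (p - 1)) \<le> p / (p - 1) * (g t powr p / (p * c powr (p - 1)) + (p - 1) / p * c * v t powr p)"
        using yc p1 by (intro mult_left_mono) auto
      also have "\<dots> = C1 * g t powr p + c * v t powr p"
      proof -
        have cp: "c powr (p - 1) > 0" using c by simp
        have "p / (p - 1) * (g t powr p / (p * c powr (p - 1))) = C1 * g t powr p"
          using p1 p cp by (simp add: C1_def field_simps)
        moreover have "p / (p - 1) * ((p - 1) / p * c * v t powr p) = c * v t powr p"
          using p1 p by (simp add: field_simps)
        ultimately show ?thesis by (simp add: distrib_left)
      qed
      finally have "p / (p - 1) * (g t * v t powr (p - 1)) \<le> C1 * g t powr p + c * v t powr p" .
      moreover have "g t * (p / (p - 1)) * (v t powr (p - 1) - a powr (p - 1)) =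
          p / (p - 1) * (g t * v t powr (p - 1)) - C3 * g t"
        by (simp add: C3_def algebra_simps)
      ultimately show ?thesis using True by (simp add: Y_def)
    next
      case False
      then show ?thesis by (simp add: Y_def)
    qed
    have LHS0: "0 \<le> g t * (p / (p - 1)) * (v t powr (p - 1) - a powr (p - 1)) * indicator \<Omega> t" for t
    proof -
      have "a powr (p - 1) \<le> v t powr (p - 1)" using a p1 v_ge by (intro powr_mono2) auto
      then show ?thesis using g_nn[of t] p1 by simp
    qed
    have Y0: "0 \<le> Y t" for t using LHS0[of t] Ypt[of t] by linarith
    have Yint: "integrable lborel Y"
      unfolding Y_def[abs_def]
      by (intro Bochner_Integration.integrable_diff Bochner_Integration.integrable_add
          integrable_mult_right gp_int vp_int g_int)
    have intY: "(\<integral>t. Y t \<partial>lborel) = C1 * Gp + c * V - C3 * G"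
    proof -
      have "(\<integral>t. Y t \<partial>lborel) = (\<integral>t. C1 * (g t powr p * indicator \<Omega> t) + c * (v t powr p * indicator \<Omega> t) \<partial>lborel)
          - (\<integral>t. C3 * (g t * indicator \<Omega> t) \<partial>lborel)"
        unfolding Y_def
        by (intro Bochner_Integration.integral_diff Bochner_Integration.integrable_add
          integrable_mult_right gp_int vp_int g_int)
      also have "(\<integral>t. C1 * (g t powr p * indicator \<Omega> t) + c * (v t powr p * indicator \<Omega> t) \<partial>lborel) =
          (\<integral>t. C1 * (g t powr p * indicator \<Omega> t) \<partial>lborel) + (\<integral>t. c * (v t powr p * indicator \<Omega> t) \<partial>lborel)"
        by (intro Bochner_Integration.integral_add integrable_mult_right gp_int vp_int)
      finally show ?thesis by (simp add: Gp_def V_def G_def)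
    qed
    have "ennreal V = ennreal (a powr p * k) + (\<integral>\<^sup>+t. ennreal (v t powr p - a powr p) * indicator \<Omega> t \<partial>lborel)"
      using stepB eV by simp
    also have "\<dots> \<le> ennreal (a powr p * k) + (\<integral>\<^sup>+t. ennreal (g t * (p / (p - 1)) * (v t powr (p - 1) - a powr (p - 1))) * indicator \<Omega> t \<partial>lborel)"
      using stepB3 stepC stepD by (intro add_left_mono) simp
    also have "(\<integral>\<^sup>+t. ennreal (g t * (p / (p - 1)) * (v t powr (p - 1) - a powr (p - 1))) * indicator \<Omega> t \<partial>lborel)
        \<le> (\<integral>\<^sup>+t. ennreal (Y t) \<partial>lborel)"
    proof (intro nn_integral_mono)
      fix t
      have "ennreal (g t * (p / (p - 1)) * (v t powr (p - 1) - a powr (p - 1))) * indicator \<Omega> t =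
          ennreal (g t * (p / (p - 1)) * (v t powr (p - 1) - a powr (p - 1)) * indicator \<Omega> t)"
        by (simp add: indicator_def)
      also have "\<dots> \<le> ennreal (Y t)" by (rule ennreal_leI[OF Ypt])
      finally show "ennreal (g t * (p / (p - 1)) * (v t powr (p - 1) - a powr (p - 1))) * indicator \<Omega> t \<le> ennreal (Y t)" .
    qed
    also have "(\<integral>\<^sup>+t. ennreal (Y t) \<partial>lborel) = ennreal (\<integral>t. Y t \<partial>lborel)"
      by (rule nn_integral_eq_integral[OF Yint]) (simp add: Y0)
    also have "ennreal (a powr p * k) + ennreal (\<integral>t. Y t \<partial>lborel) = ennreal (a powr p * k + (\<integral>t. Y t \<partial>lborel))"
      using a k Y0 by (intro ennreal_plus[symmetric]) (auto intro: integral_nonneg_AE)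
    finally have "ennreal V \<le> ennreal (a powr p * k + (C1 * Gp + c * V - C3 * G))"
      unfolding intY by simp
    moreover have "0 \<le> a powr p * k + (C1 * Gp + c * V - C3 * G)"
    proof -
      have "0 \<le> (\<integral>t. Y t \<partial>lborel)" by (rule integral_nonneg_AE) (simp add: Y0)
      moreover have "0 \<le> a powr p * k" using a k by simp
      ultimately show ?thesis unfolding intY by linarith
    qed
    ultimately have "V \<le> a powr p * k + (C1 * Gp + c * V - C3 * G)"
      using ennreal_le_iff by blast
    moreover have "C3 * G = p / (p - 1) * (a powr p * k)"
    proof -
      have "a powr p = a powr ((p - 1) + 1)" by simp
      also have "\<dots> = a powr (p - 1) * a powr 1" by (rule powr_add)
      finally have "a powr p = a powr (p - 1) * a" using a by simp
      then show ?thesis unfolding C3_def Gak by (simp add: mult_ac)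
    qed
    moreover have "a powr p * k - p / (p - 1) * (a powr p * k) = - (a powr p * k / (p - 1))"
      using p1 by (simp add: field_simps)
    moreover have "C1 * Gp = Gp / ((p - 1) * c powr (p - 1))" by (simp add: C1_def)
    ultimately show ?thesis by linarith
  qed

  have A0: "a powr p * k > 0" using a k by simp
  have Gp0: "Gp \<ge> 0" unfolding Gp_def by (rule integral_nonneg_AE) simp
  note fin = final_alg[OF p A0 VA Gp0 stepE]
  have Aeq: "a powr p * k = G powr p / k powr (p - 1)"
  proof -
    have "k powr p = k powr ((p - 1) + 1)" by simp
    also have "\<dots> = k powr (p - 1) * k powr 1" by (rule powr_add)
    finally have kp: "k powr p = k powr (p - 1) * k" using k by simp
    have "a powr p = G powr p / k powr p" unfolding a_def using Gpos' k by (simp add: powr_divide)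
    then show ?thesis unfolding kp using k by simp
  qed
  have "(\<integral>\<^sup>+t. ennreal (u t powr p) * indicator \<Omega> t \<partial>lborel) \<le> ennreal V"
    using stepA eV by simp
  also have "\<dots> \<le> ennreal (Gp * omega p (a powr p * k / Gp) powr p)"
    using fin by (intro ennreal_leI) auto
  also have "a powr p * k / Gp = G powr p / (k powr (p - 1) * Gp)"
    unfolding Aeq by simp
  finally show ?thesis unfolding G_def Gp_def .
qed



fun Wset :: "('a set \<Rightarrow> 'a set set) \<Rightarrow> ('a set \<Rightarrow> bool) \<Rightarrow> nat \<Rightarrow> 'a set \<Rightarrow> 'a set" where
  "Wset C P 0 I = (if P I then I else {})"
| "Wset C P (Suc n) I = (if P I then I else \<Union> (Wset C P n ` C I))"

lemma tree_level_Suc':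
  "tree_level C I (Suc n) = \<Union> ((\<lambda>J. tree_level C J n) ` C I)"
proof (induction n arbitrary: I)
  case 0
  then show ?case by auto
next
  case (Suc n)
  have "tree_level C I (Suc (Suc n)) = \<Union> (C ` tree_level C I (Suc n))" by simp
  also have "\<dots> = \<Union> (C ` \<Union> ((\<lambda>J. tree_level C J n) ` C I))" using Suc by simp
  also have "\<dots> = \<Union> ((\<lambda>J. \<Union> (C ` tree_level C J n)) ` C I)" by auto
  also have "\<dots> = \<Union> ((\<lambda>J. tree_level C J (Suc n)) ` C I)" by simp
  finally show ?case .
qed

locale treeC =
  fixes M :: "'a measure" and T :: "'a set set" and C :: "'a set \<Rightarrow> 'a set set"
  assumes TM: "T \<subseteq> sets M"
    and C_T: "\<And>I. I \<in> T \<Longrightarrow> C I \<subseteq> T"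
    and C_count: "\<And>I. I \<in> T \<Longrightarrow> countable (C I)"
    and C_disj: "\<And>I. I \<in> T \<Longrightarrow> disjoint (C I)"
    and C_sub: "\<And>I J. I \<in> T \<Longrightarrow> J \<in> C I \<Longrightarrow> J \<subseteq> I"
    and T_eq: "T = (\<Union>m. tree_level C (space M) m)"
    and X_T: "space M \<in> T"
begin

lemma level_props:
  assumes "I \<in> T"
  shows "tree_level C I n \<subseteq> T \<and> countable (tree_level C I n) \<and> (\<forall>J \<in> tree_level C I n. J \<subseteq> I)"
proof (induction n)
  case 0
  then show ?case using assms by auto
next
  case (Suc n)
  have "tree_level C I (Suc n) = \<Union> (C ` tree_level C I n)" by simp
  moreover have "\<Union> (C ` tree_level C I n) \<subseteq> T" using Suc C_T by blast
  moreover have "countable (\<Union> (C ` tree_level C I n))"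
    using Suc C_count by (intro countable_UN) auto
  moreover have "\<forall>J \<in> \<Union> (C ` tree_level C I n). J \<subseteq> I"
    using Suc C_sub by blast
  ultimately show ?case by simp
qed

lemma T_countable: "countable T"
  unfolding T_eq using level_props[OF X_T] by (intro countable_UN) auto

lemma T_sub_space: "I \<in> T \<Longrightarrow> I \<subseteq> space M"
  using TM sets.sets_into_space by blast

lemma W_sub: "I \<in> T \<Longrightarrow> Wset C P n I \<subseteq> I"
proof (induction n arbitrary: I)
  case 0 then show ?case by simp
next
  case (Suc n)
  have "Wset C P n J \<subseteq> I" if "J \<in> C I" for J
  proof -
    have "J \<in> T" using C_T Suc.prems that by blast
    then have "Wset C P n J \<subseteq> J" by (rule Suc.IH)
    also have "J \<subseteq> I" using C_sub Suc.prems that by blast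
    finally show ?thesis .
  qed
  then show ?case by auto
qed

lemma W_sets: "I \<in> T \<Longrightarrow> Wset C P n I \<in> sets M"
proof (induction n arbitrary: I)
  case 0 then show ?case using TM by auto
next
  case (Suc n)
  show ?case
  proof (cases "P I")
    case True then show ?thesis using Suc TM by auto
  next
    case False
    have "\<Union> (Wset C P n ` C I) \<in> sets M"
      using Suc C_T C_count by (intro sets.countable_UN') auto
    then show ?thesis using False by simp
  qed
qed

lemma W_witness: "I \<in> T \<Longrightarrow> x \<in> Wset C P n I \<Longrightarrow> \<exists>J\<in>T. x \<in> J \<and> P J"
proof (induction n arbitrary: I)
  case 0 then show ?case by (auto split: if_splits)
next
  case (Suc n)
  then show ?case using C_T by (auto split: if_splits)
qed

lemma W_complete: "I \<in> T \<Longrightarrow> J \<in> tree_level C I n \<Longrightarrow> x \<in> J \<Longrightarrow> P J \<Longrightarrow> x \<in> Wset C P n I"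
proof (induction n arbitrary: I J)
  case 0 then show ?case by simp
next
  case (Suc n)
  from Suc.prems(2) obtain J' where J': "J' \<in> C I" "J \<in> tree_level C J' n"
    unfolding tree_level_Suc' by blast
  have J'T: "J' \<in> T" using J' Suc.prems C_T by blast
  show ?case
  proof (cases "P I")
    case True
    have "J \<subseteq> J'" using level_props[OF J'T] J' by blast
    also have "J' \<subseteq> I" using C_sub Suc.prems J' by blast
    finally show ?thesis using True Suc.prems by auto
  next
    case False
    have "x \<in> Wset C P n J'" using Suc.IH[OF J'T J'(2) Suc.prems(3,4)] .
    then show ?thesis using False J' by auto
  qed
qed

lemma W_inc: "I \<in> T \<Longrightarrow> Wset C P n I \<subseteq> Wset C P (Suc n) I"
proof (induction n arbitrary: I)
  case 0 then show ?case by auto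
next
  case (Suc n)
  show ?case
  proof (cases "P I")
    case True then show ?thesis by simp
  next
    case False
    have "\<Union> (Wset C P n ` C I) \<subseteq> \<Union> (Wset C P (Suc n) ` C I)"
      using Suc.IH C_T Suc.prems by blast
    then show ?thesis using False by simp
  qed
qed

lemma W_disj: "I \<in> T \<Longrightarrow> disjoint_family_on (Wset C P n) (C I)"
  unfolding disjoint_family_on_def
proof (intro ballI impI)
  fix J1 J2 assume I: "I \<in> T" and J: "J1 \<in> C I" "J2 \<in> C I" "J1 \<noteq> J2"
  have "J1 \<inter> J2 = {}" using C_disj[OF I] J by (rule disjointD)
  moreover have "Wset C P n J1 \<subseteq> J1" "Wset C P n J2 \<subseteq> J2"
    using W_sub C_T I J by blast+
  ultimately show "Wset C P n J1 \<inter> Wset C P n J2 = {}" by blast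
qed

lemma W_weak:
  fixes \<nu> :: "'a measure" and l :: ennreal
  assumes base: "\<And>I. I \<in> T \<Longrightarrow> P I \<Longrightarrow> l * emeasure M I \<le> emeasure \<nu> I"
    and snu: "sets \<nu> = sets M"
  shows "I \<in> T \<Longrightarrow> l * emeasure M (Wset C P n I) \<le> emeasure \<nu> (Wset C P n I)"
proof (induction n arbitrary: I)
  case 0 then show ?case using base by simp
next
  case (Suc n)
  show ?case
  proof (cases "P I")
    case True then show ?thesis using base Suc.prems by simp
  next
    case False
    have sets: "\<And>J. J \<in> C I \<Longrightarrow> Wset C P n J \<in> sets M"
      using W_sets C_T Suc.prems by blast
    have sets': "\<And>J. J \<in> C I \<Longrightarrow> Wset C P n J \<in> sets \<nu>"
      using sets snu by simp
    have "l * emeasure M (\<Union> (Wset C P n ` C I)) = l * (\<integral>\<^sup>+J. emeasure M (Wset C P n J) \<partial>count_space (C I))"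
      using sets C_count[OF Suc.prems] W_disj[OF Suc.prems] by (subst emeasure_UN_countable) auto
    also have "\<dots> = (\<integral>\<^sup>+J. l * emeasure M (Wset C P n J) \<partial>count_space (C I))"
      by (rule nn_integral_cmult[symmetric]) simp
    also have "\<dots> \<le> (\<integral>\<^sup>+J. emeasure \<nu> (Wset C P n J) \<partial>count_space (C I))"
      using Suc.IH C_T Suc.prems by (intro nn_integral_mono) auto
    also have "\<dots> = emeasure \<nu> (\<Union> (Wset C P n ` C I))"
      using sets' C_count[OF Suc.prems] W_disj[OF Suc.prems] by (subst emeasure_UN_countable) auto
    finally show ?thesis using False by simp
  qed
qed

lemma dmax_eq:
  assumes "x \<in> space M"
  shows "dyadic_max M T \<phi> x = (SUP I\<in>T. ennreal (avg M I \<phi>) * indicator I x)"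
proof (rule antisym)
  show "dyadic_max M T \<phi> x \<le> (SUP I\<in>T. ennreal (avg M I \<phi>) * indicator I x)"
    unfolding dyadic_max_def
  proof (rule SUP_least)
    fix I assume "I \<in> {I \<in> T. x \<in> I}"
    then show "ennreal (avg M I \<phi>) \<le> (SUP I\<in>T. ennreal (avg M I \<phi>) * indicator I x)"
      by (intro SUP_upper2[of I]) auto
  qed
  show "(SUP I\<in>T. ennreal (avg M I \<phi>) * indicator I x) \<le> dyadic_max M T \<phi> x"
  proof (rule SUP_least)
    fix I assume I: "I \<in> T"
    show "ennreal (avg M I \<phi>) * indicator I x \<le> dyadic_max M T \<phi> x"
    proof (cases "x \<in> I")
      case True
      then show ?thesis unfolding dyadic_max_def using I by (auto intro: SUP_upper)
    qed simp
  qed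
qed

lemma dmax_meas: "dyadic_max M T \<phi> \<in> borel_measurable M"
proof -
  have "(\<lambda>x. SUP I\<in>T. ennreal (avg M I \<phi>) * indicator I x) \<in> borel_measurable M"
  proof (rule borel_measurable_SUP)
    show "countable T" by (rule T_countable)
    fix I assume "I \<in> T"
    then have [measurable]: "I \<in> sets M" using TM by blast
    show "(\<lambda>x. ennreal (avg M I \<phi>) * indicator I x) \<in> borel_measurable M" by measurable
  qed
  then show ?thesis by (subst measurable_cong[OF dmax_eq]) auto
qed

lemma doob:
  fixes \<phi> :: "'a \<Rightarrow> real" and l :: real
  assumes fm: "finite_measure M" and phim[measurable]: "\<phi> \<in> borel_measurable M"
    and nn: "\<And>x. x \<in> space M \<Longrightarrow> 0 \<le> \<phi> x" and int: "integrable M \<phi>" and l: "0 \<le> l"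
  shows "ennreal l * emeasure M {x\<in>space M. ennreal l < dyadic_max M T \<phi> x}
    \<le> emeasure (density M (\<lambda>x. ennreal (\<phi> x))) {x\<in>space M. ennreal l < dyadic_max M T \<phi> x}"
proof -
  interpret finite_measure M by (rule fm)
  define P where "P I = (l < avg M I \<phi>)" for I
  define \<nu> where "\<nu> = density M (\<lambda>x. ennreal (\<phi> x))"
  define E where "E = {x\<in>space M. ennreal l < dyadic_max M T \<phi> x}"
  have snu: "sets \<nu> = sets M" by (simp add: \<nu>_def)
  have base: "ennreal l * emeasure M I \<le> emeasure \<nu> I" if I: "I \<in> T" "P I" for I
  proof -
    have Is[measurable]: "I \<in> sets M" using TM I by blast
    define S where "S = (\<integral>y\<in>I. \<bar>\<phi> y\<bar> \<partial>M)"
    have "emeasure \<nu> I = (\<integral>\<^sup>+x. ennreal (\<phi> x) * indicator I x \<partial>M)"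
      unfolding \<nu>_def by (rule emeasure_density) auto
    also have "\<dots> = (\<integral>\<^sup>+x. ennreal (indicator I x *\<^sub>R \<bar>\<phi> x\<bar>) \<partial>M)"
      by (intro nn_integral_cong) (auto simp: indicator_def nn)
    also have "\<dots> = ennreal S"
      unfolding S_def set_lebesgue_integral_def
      by (rule nn_integral_eq_integral) (use integrable_mult_indicator[OF Is integrable_abs[OF int]] in auto)
    finally have nuI: "emeasure \<nu> I = ennreal S" .
    have muI: "emeasure M I = ennreal (measure M I)" by (rule emeasure_eq_measure)
    have lt: "l < (1 / measure M I) * S" using I(2) by (simp add: P_def avg_def S_def)
    have mpos: "measure M I > 0"
    proof (rule ccontr)
      assume "\<not> measure M I > 0"
      then have "measure M I = 0" using measure_nonneg[of M I] by linarith
      then show False using lt l by simp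
    qed
    then have "l * measure M I < S" using lt by (simp add: field_simps)
    then have "ennreal (l * measure M I) \<le> ennreal S" by (intro ennreal_leI) simp
    then show ?thesis unfolding nuI muI using l by (simp add: ennreal_mult)
  qed
  define W where "W n = Wset C P n (space M)" for n
  have Wsets: "range W \<subseteq> sets M" using W_sets[OF X_T] by (auto simp: W_def)
  have Winc: "incseq W" unfolding W_def by (rule incseq_SucI) (rule W_inc[OF X_T])
  have EW: "E = (\<Union>n. W n)"
  proof (intro set_eqI iffI)
    fix x assume "x \<in> E"
    then have x: "x \<in> space M" "ennreal l < dyadic_max M T \<phi> x" by (auto simp: E_def)
    then obtain I where I: "I \<in> T" "x \<in> I" "ennreal l < ennreal (avg M I \<phi>)"
      unfolding dyadic_max_def less_SUP_iff by auto
    have PI: "P I" using I(3) l by (simp add: P_def ennreal_less_iff)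
    obtain m where m: "I \<in> tree_level C (space M) m" using I(1) T_eq by auto
    have "x \<in> W m" unfolding W_def by (rule W_complete[OF X_T m I(2), of P]) (rule PI)
    then show "x \<in> (\<Union>n. W n)" by auto
  next
    fix x assume "x \<in> (\<Union>n. W n)"
    then obtain n where "x \<in> W n" by auto
    then obtain J where J: "J \<in> T" "x \<in> J" "P J" using W_witness[OF X_T] unfolding W_def by blast
    have xs: "x \<in> space M" using T_sub_space[OF J(1)] J(2) by auto
    have "ennreal l < ennreal (avg M J \<phi>)" using J(3) l by (simp add: P_def ennreal_less_iff)
    also have "\<dots> \<le> dyadic_max M T \<phi> x" unfolding dyadic_max_def using J by (intro SUP_upper) auto
    finally show "x \<in> E" using xs by (simp add: E_def)
  qed
  have "ennreal l * emeasure M E = ennreal l * (SUP n. emeasure M (W n))"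
    unfolding EW by (simp add: SUP_emeasure_incseq[OF Wsets Winc])
  also have "\<dots> = (SUP n. ennreal l * emeasure M (W n))" by (rule SUP_mult_left_ennreal)
  also have "\<dots> \<le> (SUP n. emeasure \<nu> (W n))"
    unfolding W_def by (intro SUP_mono) (auto intro!: W_weak[OF base snu X_T])
  also have "\<dots> = emeasure \<nu> E"
    unfolding EW using Wsets snu by (intro SUP_emeasure_incseq Winc) auto
  finally show ?thesis unfolding E_def \<nu>_def .
qed

end



lemma distfun_of:
  fixes h :: "'a \<Rightarrow> real"
  assumes fm: "finite_measure M" and hm[measurable]: "h \<in> borel_measurable M"
  shows "distfun (\<lambda>s. measure M {x\<in>space M. s < h x})"
proof -
  interpret finite_measure M by (rule fm)
  show ?thesis
  proof
    fix s s' :: real assume "0 \<le> s" "s \<le> s'"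
    then show "measure M {x\<in>space M. s' < h x} \<le> measure M {x\<in>space M. s < h x}"
      by (intro finite_measure_mono) auto
  next
    fix s :: real
    show "0 \<le> measure M {x\<in>space M. s < h x}" by simp
  next
    fix s :: real assume "0 \<le> s"
    define A where "A n = {x\<in>space M. s + 1 / real (Suc n) < h x}" for n
    have "(\<lambda>n. measure M (A n)) \<longlonglongrightarrow> measure M (\<Union>n. A n)"
    proof (rule finite_Lim_measure_incseq)
      show "range A \<subseteq> sets M" unfolding A_def by auto
      show "incseq A"
      proof (rule incseq_SucI)
        fix n
        have "1 / real (Suc (Suc n)) \<le> 1 / real (Suc n)" by (simp add: frac_le)
        then show "A n \<subseteq> A (Suc n)" unfolding A_def by auto
      qed
    qed
    moreover have "(\<Union>n. A n) = {x\<in>space M. s < h x}"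
    proof (intro set_eqI iffI)
      fix x assume "x \<in> (\<Union>n. A n)"
      then obtain n where "x \<in> A n" by auto
      then have h1: "x \<in> space M" "s + 1 / real (Suc n) < h x" unfolding A_def by blast+
      have "0 < 1 / real (Suc n)" by simp
      then have "s < h x" using h1(2) by linarith
      then show "x \<in> {x\<in>space M. s < h x}" using h1(1) by blast
    next
      fix x assume x: "x \<in> {x\<in>space M. s < h x}"
      then obtain n where "inverse (real (Suc n)) < h x - s" using reals_Archimedean[of "h x - s"] by auto
      then have "x \<in> A n" using x by (auto simp: A_def field_simps)
      then show "x \<in> (\<Union>n. A n)" by auto
    qed
    ultimately show "(\<lambda>n. measure M {x\<in>space M. s + 1 / real (Suc n) < h x}) \<longlonglongrightarrow> measure M {x\<in>space M. s < h x}"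
      unfolding A_def by simp
  next
    fix t :: real assume t: "t > 0"
    define A where "A n = {x\<in>space M. real n < h x}" for n
    have "(\<lambda>n. measure M (A n)) \<longlonglongrightarrow> measure M (\<Inter>n. A n)"
    proof (rule finite_Lim_measure_decseq)
      show "range A \<subseteq> sets M" unfolding A_def by auto
      show "decseq A" unfolding A_def by (rule decseq_SucI) auto
    qed
    moreover have "(\<Inter>n. A n) = {}"
    proof (intro set_eqI iffI)
      fix x assume "x \<in> (\<Inter>n. A n)"
      moreover obtain n where "h x < real n" using reals_Archimedean2 by auto
      ultimately show "x \<in> {}" unfolding A_def by (auto dest!: spec[of _ n])
    qed simp
    ultimately have "(\<lambda>n. measure M (A n)) \<longlonglongrightarrow> 0" by simp
    then have "eventually (\<lambda>n. measure M (A n) < t) sequentially"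
      using t by (rule order_tendstoD)
    then obtain n where "measure M (A n) < t" by (auto dest: eventually_happens)
    then show "\<exists>s\<ge>0. measure M {x\<in>space M. s < h x} < t"
      unfolding A_def by (intro exI[of _ "real n"]) auto
  qed
qed

lemma HL:
  fixes \<phi> :: "'a \<Rightarrow> real"
  assumes fm: "finite_measure M" and phim[measurable]: "\<phi> \<in> borel_measurable M"
    and nn: "\<And>x. x \<in> space M \<Longrightarrow> 0 \<le> \<phi> x" and E[measurable]: "E \<in> sets M"
  defines "D \<equiv> \<lambda>s. measure M {x\<in>space M. s < \<phi> x}"
  shows "(\<integral>\<^sup>+x. ennreal (\<phi> x) * indicator E x \<partial>M) \<le>
    (\<integral>\<^sup>+t. ennreal (rr D t) * indicator {0<..<measure M E} t \<partial>lborel)"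
proof (cases "measure M E = 0")
  case True
  interpret finite_measure M by (rule fm)
  have "emeasure M E = 0" using True by (simp add: emeasure_eq_measure)
  then have "E \<in> null_sets M" by auto
  then have "(\<integral>\<^sup>+x. ennreal (\<phi> x) * indicator E x \<partial>M) = 0"
    by (subst nn_integral_0_iff_AE) (auto simp: AE_iff_null_sets[symmetric] indicator_def elim!: AE_mp[OF AE_not_in] intro: AE_I2)
  then show ?thesis by simp
next
  case False
  interpret finite_measure M by (rule fm)
  interpret distfun D unfolding D_def by (rule distfun_of[OF fm phim])
  define c where "c = measure M E"
  have c: "c > 0" using False measure_nonneg[of M E] unfolding c_def by linarith
  have g_meas: "(\<lambda>t. indicator {0<..<c} t * rr D t) \<in> borel_measurable borel" by (rule rr_meas[OF c])
  have "(\<integral>\<^sup>+x. ennreal (\<phi> x) * indicator E x \<partial>M) = (\<integral>\<^sup>+x. ennreal (\<phi> x * indicator E x) \<partial>M)"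
    by (intro nn_integral_cong) (simp add: indicator_def)
  also have "\<dots> = (\<integral>\<^sup>+s. indicator {0<..} s * emeasure M {x\<in>space M. s < \<phi> x * indicator E x} \<partial>lborel)"
    by (rule layer_cake) (auto simp: nn finite_measure_axioms finite_measure.sigma_finite_measure[OF fm])
  also have "\<dots> \<le> (\<integral>\<^sup>+s. indicator {0<..} s * emeasure lborel {t. s < indicator {0<..<c} t * rr D t} \<partial>lborel)"
  proof (intro nn_integral_mono)
    fix s :: real
    show "indicator {0<..} s * emeasure M {x\<in>space M. s < \<phi> x * indicator E x}
      \<le> indicator {0<..} s * emeasure lborel {t. s < indicator {0<..<c} t * rr D t}"
    proof (cases "s > 0")
      case True
      have "{t. s < indicator {0<..<c} t * rr D t} = {t\<in>{0<..<c}. s < rr D t}"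
        using True by (auto simp: indicator_def)
      then have r: "emeasure lborel {t. s < indicator {0<..<c} t * rr D t} = ennreal (min c (D s))"
        using rr_dist[OF c] True by simp
      have "{x\<in>space M. s < \<phi> x * indicator E x} = E \<inter> {x\<in>space M. s < \<phi> x}"
        using True sets.sets_into_space[OF E] by (auto simp: indicator_def)
      then have "emeasure M {x\<in>space M. s < \<phi> x * indicator E x} = ennreal (measure M (E \<inter> {x\<in>space M. s < \<phi> x}))"
        by (simp add: emeasure_eq_measure)
      also have "\<dots> \<le> ennreal (min c (D s))"
        unfolding c_def D_def by (intro ennreal_leI min.boundedI finite_measure_mono) auto
      finally show ?thesis unfolding r by (intro mult_left_mono) auto
    qed simp
  qed
  also have "\<dots> = (\<integral>\<^sup>+t. ennreal (indicator {0<..<c} t * rr D t) \<partial>lborel)"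
  proof -
    have "(\<integral>\<^sup>+t. ennreal (indicator {0<..<c} t * rr D t) \<partial>lborel) =
      (\<integral>\<^sup>+s. indicator {0<..} s * emeasure lborel {x\<in>space lborel. s < indicator {0<..<c} x * rr D x} \<partial>lborel)"
      apply (rule layer_cake)
        apply (rule lborel.sigma_finite_measure_axioms)
      using g_meas apply simp
      apply (auto simp: rr_nn indicator_def)
      done
    then show ?thesis by simp
  qed
  also have "\<dots> = (\<integral>\<^sup>+t. ennreal (rr D t) * indicator {0<..<c} t \<partial>lborel)"
    by (intro nn_integral_cong) (simp add: indicator_def)
  finally show ?thesis unfolding c_def .
qed

context distfun
begin

lemma rr_nn_meas:
  assumes "x > 0"
  shows "(\<lambda>t. ennreal (rr D t) * indicator {0<..<x} t) \<in> borel_measurable borel"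
proof -
  have "(\<lambda>t. ennreal (indicator {0<..<x} t * rr D t)) \<in> borel_measurable borel"
    using rr_meas[OF assms] by measurable
  moreover have "(\<lambda>t. ennreal (indicator {0<..<x} t * rr D t)) = (\<lambda>t. ennreal (rr D t) * indicator {0<..<x} t)"
    by (auto simp: indicator_def fun_eq_iff)
  ultimately show ?thesis by simp
qed

lemma concave:
  fixes l m M' :: real
  assumes l: "0 \<le> l" and m: "0 \<le> m" "m \<le> M'"
    and big: "ennreal l * ennreal M' \<le> (\<integral>\<^sup>+t. ennreal (rr D t) * indicator {0<..<M'} t \<partial>lborel)"
    and fin: "(\<integral>\<^sup>+t. ennreal (rr D t) * indicator {0<..<M'} t \<partial>lborel) < \<infinity>"
  shows "ennreal l * ennreal m \<le> (\<integral>\<^sup>+t. ennreal (rr D t) * indicator {0<..<m} t \<partial>lborel)"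
proof (cases "m = 0")
  case True then show ?thesis by simp
next
  case False
  then have m0: "m > 0" using m by simp
  then have M0: "M' > 0" using m by simp
  define G where "G x = (\<integral>\<^sup>+t. ennreal (rr D t) * indicator {0<..<x} t \<partial>lborel)" for x
  define gm where "gm = rr D m"
  have gm0: "gm \<ge> 0" unfolding gm_def using rr_nn m0 by simp
  define H where "H = (\<integral>\<^sup>+t. ennreal (rr D t) * indicator {m..<M'} t \<partial>lborel)"
  have Hmeas: "(\<lambda>t. ennreal (rr D t) * indicator {m..<M'} t) \<in> borel_measurable borel"
  proof -
    have "(\<lambda>t. ennreal (rr D t) * indicator {0<..<M'} t * indicator {m..<M'} t) \<in> borel_measurable borel"
      using rr_nn_meas[OF M0] by measurable
    moreover have "(\<lambda>t. ennreal (rr D t) * indicator {0<..<M'} t * indicator {m..<M'} t) = (\<lambda>t. ennreal (rr D t) * indicator {m..<M'} t)"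
      using m0 by (auto simp: indicator_def fun_eq_iff)
    ultimately show ?thesis by simp
  qed
  have c1: "G M' = G m + H"
  proof -
    have "G M' = (\<integral>\<^sup>+t. ennreal (rr D t) * indicator {0<..<m} t + ennreal (rr D t) * indicator {m..<M'} t \<partial>lborel)"
      unfolding G_def using m0 m by (intro nn_integral_cong) (auto simp: indicator_def)
    also have "\<dots> = G m + H" unfolding G_def H_def
      using rr_nn_meas[OF m0] Hmeas by (intro nn_integral_add) auto
    finally show ?thesis .
  qed
  have c2: "H \<le> ennreal (gm * (M' - m))"
  proof -
    have "H \<le> (\<integral>\<^sup>+t. ennreal gm * indicator {m..<M'} t \<partial>lborel)"
      unfolding H_def
    proof (intro nn_integral_mono)
      fix t :: real
      show "ennreal (rr D t) * indicator {m..<M'} t \<le> ennreal gm * indicator {m..<M'} t"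
      proof (cases "t \<in> {m..<M'}")
        case True
        then have "rr D t \<le> gm" unfolding gm_def using m0 by (intro rr_mono) auto
        then show ?thesis using True by (simp add: ennreal_leI)
      qed simp
    qed
    also have "\<dots> = ennreal gm * ennreal (M' - m)" using m by (subst nn_integral_cmult_indicator) auto
    also have "\<dots> = ennreal (gm * (M' - m))" using gm0 m by (simp add: ennreal_mult)
    finally show ?thesis .
  qed
  have c3: "ennreal (gm * m) \<le> G m"
  proof -
    have "ennreal (gm * m) = (\<integral>\<^sup>+t. ennreal gm * indicator {0<..<m} t \<partial>lborel)"
      using gm0 m0 by (subst nn_integral_cmult_indicator) (auto simp: ennreal_mult)
    also have "\<dots> \<le> G m" unfolding G_def
    proof (intro nn_integral_mono)
      fix t :: real
      show "ennreal gm * indicator {0<..<m} t \<le> ennreal (rr D t) * indicator {0<..<m} t"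
      proof (cases "t \<in> {0<..<m}")
        case True
        then have "gm \<le> rr D t" unfolding gm_def by (intro rr_mono) auto
        then show ?thesis using True by (simp add: ennreal_leI)
      qed simp
    qed
    finally show ?thesis .
  qed
  have Gmfin: "G m < \<infinity>" using fin c1 unfolding G_def[symmetric] by (simp add: top_unique)
  then obtain Gm where Gm: "G m = ennreal Gm" "0 \<le> Gm" by (cases "G m") auto
  have Hfin: "H < \<infinity>" using c2 by (simp add: le_less_trans)
  then obtain Hr where Hr: "H = ennreal Hr" "0 \<le> Hr" by (cases H) auto
  have r1: "l * M' \<le> Gm + Hr"
    using big c1 Gm Hr l M0 unfolding G_def[symmetric] by (simp add: ennreal_mult[symmetric] ennreal_plus[symmetric] del: ennreal_plus)
  have r2: "Hr \<le> gm * (M' - m)" using c2 Hr gm0 m by (simp add: ennreal_le_iff)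
  have r3: "gm * m \<le> Gm" using c3 Gm by (simp add: ennreal_le_iff)
  show ?thesis
  proof (rule ccontr)
    assume "\<not> ennreal l * ennreal m \<le> (\<integral>\<^sup>+t. ennreal (rr D t) * indicator {0<..<m} t \<partial>lborel)"
    then have "Gm < l * m" using Gm l m unfolding G_def[symmetric] by (simp add: ennreal_mult[symmetric] not_le)
    then have "gm * m < l * m" using r3 by simp
    then have "gm < l" using m0 by simp
    then have "gm * (M' - m) \<le> l * (M' - m)" using m by (intro mult_right_mono) auto
    then have "l * M' < l * m + l * (M' - m)" using r1 r2 \<open>Gm < l * m\<close> by linarith
    then show False by (simp add: algebra_simps)
  qed
qed

end



lemma rearr_pow_le:
  fixes \<phi> :: "'a \<Rightarrow> real"
  assumes fm: "finite_measure M" and phim[measurable]: "\<phi> \<in> borel_measurable M"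
    and nn: "\<And>x. x \<in> space M \<Longrightarrow> 0 \<le> \<phi> x" and c: "c > 0" and q: "q > 0"
  defines "D \<equiv> \<lambda>s. measure M {x\<in>space M. s < \<phi> x}"
  shows "(\<integral>\<^sup>+t. ennreal ((indicator {0<..<c} t * rr D t) powr q) \<partial>lborel) \<le> (\<integral>\<^sup>+x. ennreal (\<phi> x powr q) \<partial>M)"
proof -
  interpret finite_measure M by (rule fm)
  interpret distfun D unfolding D_def by (rule distfun_of[OF fm phim])
  show ?thesis
  proof (rule dist_compare)
    show "sigma_finite_measure lborel" by (rule lborel.sigma_finite_measure_axioms)
    show "sigma_finite_measure M" by (rule sigma_finite_measure)
    show "(\<lambda>t. indicator {0<..<c} t * rr D t) \<in> borel_measurable lborel" using rr_meas[OF c] by simp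
    show "\<phi> \<in> borel_measurable M" by (rule phim)
    show "0 \<le> indicator {0<..<c} t * rr D t" for t by (auto simp: indicator_def rr_nn)
    show "0 \<le> \<phi> x" if "x \<in> space M" for x using nn that .
    show "q > 0" by (rule q)
    fix s :: real assume s: "s > 0"
    have "{t\<in>space lborel. s < indicator {0<..<c} t * rr D t} = {t\<in>{0<..<c}. s < rr D t}"
      using s by (auto simp: indicator_def)
    then have "emeasure lborel {t\<in>space lborel. s < indicator {0<..<c} t * rr D t} = ennreal (min c (D s))"
      using rr_dist[OF c] s by simp
    also have "\<dots> \<le> ennreal (D s)" by (intro ennreal_leI) simp
    also have "\<dots> = emeasure M {x\<in>space M. s < \<phi> x}" unfolding D_def by (simp add: emeasure_eq_measure)
    finally show "emeasure lborel {t\<in>space lborel. s < indicator {0<..<c} t * rr D t} \<le> emeasure M {x\<in>space M. s < \<phi> x}" .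
  qed
qed


theorem lemma3p2:
  fixes M :: "'a measure" and T :: "'a set set" and \<phi> :: "'a \<Rightarrow> real"
    and p f F k :: real and K :: "'a set"
  assumes "prob_space M" and "non_atomic M" and "is_tree M T"
    and "p > 1"
    and "\<phi> \<in> borel_measurable M" and "\<And>x. x \<in> space M \<Longrightarrow> \<phi> x \<ge> 0"
    and "integrable M \<phi>" and "integrable M (\<lambda>x. \<phi> x powr p)"
    and "(\<integral>x. \<phi> x \<partial>M) = f" and "(\<integral>x. \<phi> x powr p \<partial>M) = F"
    and "0 < f powr p" and "f powr p \<le> F"
    and "K \<in> sets M" and "measure M K = k" and "0 < k" and "k \<le> 1"
  shows "(\<integral>\<^sup>+x\<in>K. ennreal_powr (dyadic_max M T \<phi> x) p \<partial>M)
    \<le> ennreal ((\<integral>u\<in>{0<..k}. rearr M \<phi> u powr p \<partial>lborel) *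
        omega p ((\<integral>u\<in>{0<..k}. rearr M \<phi> u \<partial>lborel) powr p /
                 (k powr (p - 1) * (\<integral>u\<in>{0<..k}. rearr M \<phi> u powr p \<partial>lborel))) powr p)"
proof -
  note ps = assms(1) and tree = assms(3) and p = assms(4) and phim[measurable] = assms(5)
    and nn = assms(6) and int1 = assms(7) and intp = assms(8) and fdef = assms(9)
    and fpos = assms(11) and Ks[measurable] = assms(13) and Kk = assms(14) and k = assms(15) and k1 = assms(16)
  interpret prob_space M by (rule ps)
  have fm: "finite_measure M" by (rule finite_measure_axioms)
  have p0: "p > 0" using p by simp
  obtain C where C: "\<forall>I\<in>T. C I \<subseteq> T \<and> countable (C I) \<and> (\<exists>J1\<in>C I. \<exists>J2\<in>C I. J1 \<noteq> J2) \<and>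
              disjoint (C I) \<and> (\<forall>J\<in>C I. J \<subseteq> I) \<and> \<Union> (C I) = I"
    and Teq: "T = (\<Union>m. tree_level C (space M) m)"
    and TM: "T \<subseteq> sets M" and XT: "space M \<in> T"
    using tree unfolding is_tree_def by blast
  interpret tr: treeC M T C
  proof
    show "T \<subseteq> sets M" by (rule TM)
    show "C I \<subseteq> T" if "I \<in> T" for I using C that by blast
    show "countable (C I)" if "I \<in> T" for I using C that by blast
    show "disjoint (C I)" if "I \<in> T" for I using C that by blast
    show "J \<subseteq> I" if "I \<in> T" "J \<in> C I" for I J using C that by blast
    show "T = (\<Union>m. tree_level C (space M) m)" by (rule Teq)
    show "space M \<in> T" by (rule XT)
  qed
  define D where "D = (\<lambda>s. measure M {x\<in>space M. s < \<phi> x})"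
  interpret dp: distfun D unfolding D_def by (rule distfun_of[OF fm phim])
  define g where "g = rr D"
  have rearr_eq: "rearr M \<phi> = g" by (simp add: fun_eq_iff rearr_def g_def rr_def D_def)
  define \<Omega> where "\<Omega> = {0<..<k}"
  define gI where "gI t = indicator \<Omega> t * g t" for t
  have gIm[measurable]: "gI \<in> borel_measurable borel"
    unfolding gI_def[abs_def] \<Omega>_def g_def by (rule dp.rr_meas[OF k])
  have gI_nn: "0 \<le> gI t" for t by (auto simp: gI_def indicator_def g_def \<Omega>_def dp.rr_nn)
  have nnfin: "(\<integral>\<^sup>+x. ennreal (\<phi> x powr q) \<partial>M) < \<infinity>" if "q = 1 \<or> q = p" for q
  proof -
    have iq: "integrable M (\<lambda>x. \<phi> x powr q)"
    proof (cases "q = 1")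
      case True
      then show ?thesis using integrable_abs[OF int1] by simp
    next
      case False then show ?thesis using that intp by simp
    qed
    have "(\<integral>\<^sup>+x. ennreal (\<phi> x powr q) \<partial>M) = ennreal (\<integral>x. \<phi> x powr q \<partial>M)"
      by (rule nn_integral_eq_integral[OF iq]) simp
    then show ?thesis by simp
  qed
  have gI_le: "(\<integral>\<^sup>+t. ennreal (gI t powr q) \<partial>lborel) \<le> (\<integral>\<^sup>+x. ennreal (\<phi> x powr q) \<partial>M)" if "q > 0" for q
    unfolding gI_def \<Omega>_def g_def D_def by (rule rearr_pow_le[OF fm phim nn k that])
  have gIq_int: "integrable lborel (\<lambda>t. gI t powr q * indicator \<Omega> t)" if "q = 1 \<or> q = p" for q
  proof (rule integrableI_nonneg)
    show "(\<lambda>t. gI t powr q * indicator \<Omega> t) \<in> borel_measurable lborel" by (simp add: \<Omega>_def)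
    show "AE x in lborel. 0 \<le> gI x powr q * indicator \<Omega> x" by simp
    have q0: "q > 0" using that p by auto
    have "(\<integral>\<^sup>+t. ennreal (gI t powr q * indicator \<Omega> t) \<partial>lborel) \<le> (\<integral>\<^sup>+t. ennreal (gI t powr q) \<partial>lborel)"
      by (intro nn_integral_mono) (auto simp: indicator_def)
    also have "\<dots> \<le> (\<integral>\<^sup>+x. ennreal (\<phi> x powr q) \<partial>M)" by (rule gI_le[OF q0])
    also have "\<dots> < \<infinity>" by (rule nnfin[OF that])
    finally show "(\<integral>\<^sup>+t. ennreal (gI t powr q * indicator \<Omega> t) \<partial>lborel) < \<infinity>" .
  qed
  have gIp_int: "integrable lborel (\<lambda>t. gI t powr p * indicator \<Omega> t)" using gIq_int by simp
  have gI1_int: "integrable lborel (\<lambda>t. gI t * indicator \<Omega> t)"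
    using gIq_int[of 1] gI_nn by (simp add: powr_one)
  have Gpos: "0 < (\<integral>t. gI t * indicator \<Omega> t \<partial>lborel)"
  proof -
    have f0: "f \<noteq> 0" using fpos p by auto
    have D0: "D 0 > 0"
    proof (rule ccontr)
      assume "\<not> D 0 > 0"
      then have "D 0 = 0" using dp.D_nn[of 0] by simp
      then have "emeasure M {x\<in>space M. 0 < \<phi> x} = 0" by (simp add: D_def emeasure_eq_measure)
      then have "AE x in M. \<not> 0 < \<phi> x"
        by (subst AE_iff_measurable[of "{x\<in>space M. 0 < \<phi> x}"]) auto
      then have "AE x in M. \<phi> x = 0"
        using AE_space by eventually_elim (use nn in force)
      then have "(\<integral>x. \<phi> x \<partial>M) = 0" by (rule integral_eq_zero_AE)
      then show False using fdef f0 by simp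
    qed
    have "eventually (\<lambda>j. D 0 / 2 < D (0 + 1 / real (Suc j))) sequentially"
      using dp.D_rc[of 0] D0 by (intro order_tendstoD(1)) auto
    then obtain j where j: "D 0 / 2 < D (0 + 1 / real (Suc j))" by (auto dest: eventually_happens)
    define s' where "s' = 1 / real (Suc j)"
    have s': "s' > 0" by (simp add: s'_def)
    have js: "D 0 / 2 < D s'" using j by (simp add: s'_def)
    define \<tau> where "\<tau> = min k (D s')"
    have \<tau>: "\<tau> > 0" using k js D0 by (simp add: \<tau>_def)
    have low: "s' / 2 < g t" if "0 < t" "t < \<tau>" for t
    proof -
      have "t \<le> D s'" using that by (simp add: \<tau>_def)
      then have "\<exists>s''>s' / 2. t \<le> D s''" using s' by (intro exI[of _ s']) auto
      then show ?thesis unfolding g_def using dp.rr_gt_iff[of t "s' / 2"] that s' by simp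
    qed
    have "ennreal (s' / 2 * \<tau>) = (\<integral>\<^sup>+t. ennreal (s' / 2) * indicator {0<..<\<tau>} t \<partial>lborel)"
      using s' \<tau> by (subst nn_integral_cmult_indicator) (auto simp: ennreal_mult[symmetric] simp del: times_divide_eq_left)
    also have "\<dots> \<le> (\<integral>\<^sup>+t. ennreal (gI t * indicator \<Omega> t) \<partial>lborel)"
    proof (intro nn_integral_mono)
      fix t :: real
      show "ennreal (s' / 2) * indicator {0<..<\<tau>} t \<le> ennreal (gI t * indicator \<Omega> t)"
      proof (cases "t \<in> {0<..<\<tau>}")
        case True
        then have tO: "t \<in> \<Omega>" by (auto simp: \<Omega>_def \<tau>_def)
        have "s' / 2 < g t" using True low by auto
        then show ?thesis using True tO by (auto simp: gI_def intro!: ennreal_leI)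
      qed simp
    qed
    also have "\<dots> = ennreal (\<integral>t. gI t * indicator \<Omega> t \<partial>lborel)"
      by (rule nn_integral_eq_integral[OF gI1_int]) (simp add: gI_nn)
    finally have le: "ennreal (s' / 2 * \<tau>) \<le> ennreal (\<integral>t. gI t * indicator \<Omega> t \<partial>lborel)" .
    have nn0: "0 \<le> (\<integral>t. gI t * indicator \<Omega> t \<partial>lborel)"
      by (rule integral_nonneg_AE) (simp add: gI_nn)
    have "s' / 2 * \<tau> \<le> (\<integral>t. gI t * indicator \<Omega> t \<partial>lborel)"
      using le nn0 by (simp add: ennreal_le_iff)
    moreover have "0 < s' / 2 * \<tau>" using s' \<tau> by simp
    ultimately show ?thesis by linarith
  qed
  define RC where "RC = (\<integral>t. gI t powr p * indicator \<Omega> t \<partial>lborel) *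
       omega p ((\<integral>t. gI t * indicator \<Omega> t \<partial>lborel) powr p /
         (k powr (p - 1) * (\<integral>t. gI t powr p * indicator \<Omega> t \<partial>lborel))) powr p"
  define Mphi where "Mphi = dyadic_max M T \<phi>"
  have Mm[measurable]: "Mphi \<in> borel_measurable M" unfolding Mphi_def by (rule tr.dmax_meas)
  define h where "h n x = enn2real (min (Mphi x) (ennreal (real n)))" for n x
  define fK where "fK n x = h n x * indicator K x" for n x
  have hm[measurable]: "h n \<in> borel_measurable M" for n unfolding h_def[abs_def] by measurable
  have fKm[measurable]: "fK n \<in> borel_measurable M" for n unfolding fK_def[abs_def] by measurable
  have h_nn: "0 \<le> h n x" for n x by (simp add: h_def)
  have h_le: "h n x \<le> real n" for n x
  proof -
    have "enn2real (min (Mphi x) (ennreal (real n))) \<le> enn2real (ennreal (real n))"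
      by (rule enn2real_mono) auto
    then show ?thesis by (simp add: h_def)
  qed
  have h_lt: "ennreal l < Mphi x" if "0 \<le> l" "l < h n x" for l n x
  proof (rule ccontr)
    assume "\<not> ennreal l < Mphi x"
    then have "min (Mphi x) (ennreal (real n)) \<le> ennreal l" by (simp add: not_less min.coboundedI1)
    then have "enn2real (min (Mphi x) (ennreal (real n))) \<le> enn2real (ennreal l)"
      by (rule enn2real_mono) simp
    then show False using that by (simp add: h_def)
  qed
  have fK_nn: "0 \<le> fK n x" for n x by (simp add: fK_def h_nn)
  have fK_le: "fK n x \<le> real n" for n x
    using h_le[of n x] h_nn[of n x] by (auto simp: fK_def indicator_def)

  have bound_n: "(\<integral>\<^sup>+x. ennreal (fK n x powr p) \<partial>M) \<le> ennreal RC" for n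
  proof -
    define DN where "DN = (\<lambda>s. measure M {x\<in>space M. s < fK n x})"
    interpret dN: distfun DN unfolding DN_def by (rule distfun_of[OF fm fKm])
    define uI where "uI t = indicator \<Omega> t * rr DN t" for t
    have uIm[measurable]: "uI \<in> borel_measurable borel"
      unfolding uI_def[abs_def] \<Omega>_def by (rule dN.rr_meas[OF k])
    have uI_nn: "0 \<le> uI t" for t by (auto simp: uI_def indicator_def \<Omega>_def dN.rr_nn)
    have DN_n: "DN (real n) = 0"
    proof -
      have "{x\<in>space M. real n < fK n x} = {}" using fK_le[of n] by (auto simp: not_less)
      then show ?thesis unfolding DN_def by (simp only: measure_empty)
    qed
    have uI_le: "uI t \<le> real n" for t
    proof (cases "t \<in> \<Omega>")
      case True
      then have t: "t > 0" by (simp add: \<Omega>_def)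
      have "rr DN t \<le> real n" unfolding rr_def
        by (rule cInf_lower) (use t DN_n dN.S_bdd in auto)
      then show ?thesis using True by (simp add: uI_def)
    qed (simp add: uI_def)
    have DN_le_k: "DN s \<le> k" if "0 \<le> s" for s
    proof -
      have "DN s \<le> measure M K"
        unfolding DN_def using that by (intro finite_measure_mono) (auto simp: fK_def indicator_def)
      then show ?thesis using Kk by simp
    qed
    have emN: "emeasure lborel {t\<in>\<Omega>. s < rr DN t} = ennreal (DN s)" if "0 \<le> s" for s
      using dN.rr_dist[OF k that] DN_le_k[OF that] by (simp add: \<Omega>_def min_def)
    have hyp: "ennreal l * emeasure lborel {t\<in>\<Omega>. l < uI t}
        \<le> (\<integral>\<^sup>+t. ennreal (gI t) * indicator {t\<in>\<Omega>. l < uI t} t \<partial>lborel)" if l: "l > 0" for l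
    proof -
      have seteq: "{t\<in>\<Omega>. l < uI t} = {t\<in>\<Omega>. l < rr DN t}" by (auto simp: uI_def)
      define m where "m = DN l"
      have em: "emeasure lborel {t\<in>\<Omega>. l < uI t} = ennreal m" unfolding seteq m_def using l by (intro emN) simp
      show ?thesis
      proof (cases "m = 0")
        case True then show ?thesis unfolding em by simp
      next
        case False
        then have m0: "m > 0" using dN.D_nn[of l] by (simp add: m_def)
        have mk: "m \<le> k" using DN_le_k l by (simp add: m_def)
        have sub: "{0<..<m} \<subseteq> {t\<in>\<Omega>. l < rr DN t}"
        proof
          fix t assume t: "t \<in> {0<..<m}"
          have "eventually (\<lambda>j. t < DN (l + 1 / real (Suc j))) sequentially"
            using dN.D_rc[of l] l t by (intro order_tendstoD(1)) (auto simp: m_def)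
          then obtain j where j: "t < DN (l + 1 / real (Suc j))" by (auto dest: eventually_happens)
          have "\<exists>s'>l. t \<le> DN s'" using j by (intro exI[of _ "l + 1 / real (Suc j)"]) auto
          then have "l < rr DN t" using dN.rr_gt_iff[of t l] t l by auto
          then show "t \<in> {t\<in>\<Omega>. l < rr DN t}" using t mk by (auto simp: \<Omega>_def)
        qed
        define E where "E = {x\<in>space M. ennreal l < Mphi x}"
        have Es[measurable]: "E \<in> sets M" unfolding E_def by measurable
        define M' where "M' = measure M E"
        have mM: "m \<le> M'"
        proof -
          have "{x\<in>space M. l < fK n x} \<subseteq> E"
          proof
            fix x assume x: "x \<in> {x\<in>space M. l < fK n x}"
            have "x \<in> K"
            proof (rule ccontr)
              assume "x \<notin> K"
              then have "fK n x = 0" by (simp add: fK_def)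
              then show False using x l by simp
            qed
            then have "l < h n x" using x by (simp add: fK_def)
            then show "x \<in> E" using x h_lt[of l n x] l by (simp add: E_def)
          qed
          then show ?thesis unfolding m_def DN_def M'_def by (intro finite_measure_mono) auto
        qed
        have M0: "M' > 0" using m0 mM by simp
        have big: "ennreal l * ennreal M' \<le> (\<integral>\<^sup>+t. ennreal (rr D t) * indicator {0<..<M'} t \<partial>lborel)"
        proof -
          have "ennreal l * ennreal M' = ennreal l * emeasure M E" by (simp add: M'_def emeasure_eq_measure)
          also have "\<dots> \<le> emeasure (density M (\<lambda>x. ennreal (\<phi> x))) E"
            unfolding E_def Mphi_def by (rule tr.doob[OF fm phim nn int1 less_imp_le[OF l]])
          also have "\<dots> = (\<integral>\<^sup>+x. ennreal (\<phi> x) * indicator E x \<partial>M)"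
            by (rule emeasure_density) auto
          also have "\<dots> \<le> (\<integral>\<^sup>+t. ennreal (rr D t) * indicator {0<..<M'} t \<partial>lborel)"
            unfolding M'_def D_def by (rule HL[OF fm phim nn Es])
          finally show ?thesis .
        qed
        have fin: "(\<integral>\<^sup>+t. ennreal (rr D t) * indicator {0<..<M'} t \<partial>lborel) < \<infinity>"
        proof -
          have "(\<integral>\<^sup>+t. ennreal (rr D t) * indicator {0<..<M'} t \<partial>lborel) =
              (\<integral>\<^sup>+t. ennreal ((indicator {0<..<M'} t * rr D t) powr 1) \<partial>lborel)"
            by (intro nn_integral_cong) (auto simp: indicator_def dp.rr_nn)
          also have "\<dots> \<le> (\<integral>\<^sup>+x. ennreal (\<phi> x powr 1) \<partial>M)"
            unfolding D_def by (rule rearr_pow_le[OF fm phim nn M0 zero_less_one[where 'a=real]])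
          also have "\<dots> < \<infinity>" by (rule nnfin) (rule disjI1, rule refl)
          finally show ?thesis .
        qed
        have "ennreal l * ennreal m \<le> (\<integral>\<^sup>+t. ennreal (rr D t) * indicator {0<..<m} t \<partial>lborel)"
          by (rule dp.concave[OF _ _ mM big fin]) (use l m0 in auto)
        also have "\<dots> \<le> (\<integral>\<^sup>+t. ennreal (gI t) * indicator {t\<in>\<Omega>. l < uI t} t \<partial>lborel)"
        proof (intro nn_integral_mono)
          fix t :: real
          show "ennreal (rr D t) * indicator {0<..<m} t \<le> ennreal (gI t) * indicator {t\<in>\<Omega>. l < uI t} t"
          proof (cases "t \<in> {0<..<m}")
            case True
            then have "t \<in> {t\<in>\<Omega>. l < uI t}" using sub seteq by blast
            then show ?thesis using True by (simp add: gI_def g_def)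
          qed simp
        qed
        finally show ?thesis unfolding em .
      qed
    qed
    have core_app: "(\<integral>\<^sup>+t. ennreal (uI t powr p) * indicator {0<..<k} t \<partial>lborel) \<le> ennreal RC"
      unfolding RC_def \<Omega>_def
      by (rule core[OF k p gIm uIm gI_nn uI_nn uI_le])
        (use gIp_int gI1_int Gpos hyp in \<open>simp_all add: \<Omega>_def\<close>)
    have "(\<integral>\<^sup>+x. ennreal (fK n x powr p) \<partial>M) \<le> (\<integral>\<^sup>+t. ennreal (uI t powr p) \<partial>lborel)"
    proof (rule dist_compare)
      show "sigma_finite_measure M" by (rule sigma_finite_measure)
      show "sigma_finite_measure lborel" by (rule lborel.sigma_finite_measure_axioms)
      show "fK n \<in> borel_measurable M" by (rule fKm)
      show "uI \<in> borel_measurable lborel" using uIm by simp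
      show "0 \<le> fK n x" for x by (rule fK_nn)
      show "0 \<le> uI t" for t by (rule uI_nn)
      show "p > 0" by (rule p0)
      fix s :: real assume s: "s > 0"
      have "emeasure M {x\<in>space M. s < fK n x} = ennreal (DN s)" by (simp add: DN_def emeasure_eq_measure)
      also have "\<dots> = emeasure lborel {t\<in>\<Omega>. s < rr DN t}" using s by (intro emN[symmetric]) simp
      also have "{t\<in>\<Omega>. s < rr DN t} = {t\<in>space lborel. s < uI t}"
        using s by (auto simp: uI_def indicator_def)
      finally show "emeasure M {x\<in>space M. s < fK n x} \<le> emeasure lborel {t\<in>space lborel. s < uI t}" by simp
    qed
    also have "\<dots> = (\<integral>\<^sup>+t. ennreal (uI t powr p) * indicator {0<..<k} t \<partial>lborel)"
      by (intro nn_integral_cong) (auto simp: uI_def indicator_def \<Omega>_def)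
    also have "\<dots> \<le> ennreal RC" by (rule core_app)
    finally show ?thesis .
  qed

  have pt: "ennreal_powr (Mphi x) p * indicator K x \<le> (SUP n. ennreal (fK n x powr p))" for x
  proof (cases "x \<in> K")
    case False then show ?thesis by simp
  next
    case True
    then have fKh: "fK n x = h n x" for n by (simp add: fK_def)
    show ?thesis
    proof (cases "Mphi x = \<top>")
      case True
      have hn: "h n x = real n" for n using True by (simp add: h_def)
      have "\<top> = (SUP n. of_nat n :: ennreal)" by (simp add: ennreal_SUP_of_nat_eq_top)
      also have "\<dots> \<le> (SUP n. ennreal (fK n x powr p))"
      proof (rule SUP_mono)
        fix n :: nat
        have "real n \<le> real n powr p"
        proof (cases "n = 0")
          case False
          then have "real n powr 1 \<le> real n powr p" using p by (intro powr_mono) auto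
          then show ?thesis by simp
        qed simp
        then have "of_nat n \<le> ennreal (fK n x powr p)"
          unfolding fKh hn by (simp add: ennreal_of_nat_eq_real_of_nat ennreal_leI)
        then show "\<exists>m\<in>UNIV. of_nat n \<le> ennreal (fK m x powr p)" by blast
      qed
      finally show ?thesis using True \<open>x \<in> K\<close> by (simp add: ennreal_powr_def)
    next
      case False
      then obtain r where r: "Mphi x = ennreal r" "0 \<le> r" by (cases "Mphi x") auto
      obtain n where n: "r \<le> real n" using real_arch_simple by blast
      have "min (Mphi x) (ennreal (real n)) = ennreal r" using r n by (simp add: min_def ennreal_le_iff)
      then have "h n x = r" using r by (simp add: h_def)
      then have "ennreal_powr (Mphi x) p * indicator K x = ennreal (fK n x powr p)"
        using r \<open>x \<in> K\<close> fKh by (simp add: ennreal_powr_def)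
      also have "\<dots> \<le> (SUP n. ennreal (fK n x powr p))" by (rule SUP_upper) simp
      finally show ?thesis .
    qed
  qed
  have inc: "incseq (\<lambda>n x. ennreal (fK n x powr p))"
  proof (rule incseq_SucI, rule le_funI)
    fix n x
    have "min (Mphi x) (ennreal (real n)) \<le> min (Mphi x) (ennreal (real (Suc n)))"
      by (intro min.mono) (auto intro: ennreal_leI)
    then have "h n x \<le> h (Suc n) x" unfolding h_def
      by (rule enn2real_mono) (rule le_less_trans[OF min.cobounded2], simp only: ennreal_less_top)
    then have "fK n x \<le> fK (Suc n) x" by (auto simp: fK_def indicator_def)
    then show "ennreal (fK n x powr p) \<le> ennreal (fK (Suc n) x powr p)"
      using fK_nn p by (intro ennreal_leI powr_mono2) auto
  qed
  have "(\<integral>\<^sup>+x\<in>K. ennreal_powr (dyadic_max M T \<phi> x) p \<partial>M) \<le> (\<integral>\<^sup>+x. (SUP n. ennreal (fK n x powr p)) \<partial>M)"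
    unfolding Mphi_def[symmetric] by (intro nn_integral_mono pt)
  also have "\<dots> = (SUP n. \<integral>\<^sup>+x. ennreal (fK n x powr p) \<partial>M)"
    by (rule nn_integral_monotone_convergence_SUP[OF inc]) measurable
  also have "\<dots> \<le> ennreal RC" by (rule SUP_least) (rule bound_n)
  also have "RC = (\<integral>u\<in>{0<..k}. rearr M \<phi> u powr p \<partial>lborel) *
        omega p ((\<integral>u\<in>{0<..k}. rearr M \<phi> u \<partial>lborel) powr p /
                 (k powr (p - 1) * (\<integral>u\<in>{0<..k}. rearr M \<phi> u powr p \<partial>lborel))) powr p"
  proof -
    have eqq: "(\<integral>u\<in>{0<..k}. rearr M \<phi> u powr q \<partial>lborel) = (\<integral>t. gI t powr q * indicator \<Omega> t \<partial>lborel)"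
      if q: "q > 0" for q
    proof -
      have fe: "(\<lambda>u. indicator {0<..k} u *\<^sub>R rearr M \<phi> u powr q) =
          (\<lambda>u. gI u powr q * indicator \<Omega> u + indicator {k} u * g k powr q)"
        using k q by (auto simp: fun_eq_iff indicator_def gI_def \<Omega>_def rearr_eq)
      have "(\<lambda>u. gI u powr q * indicator \<Omega> u + indicator {k} u * g k powr q) \<in> borel_measurable lborel"
        unfolding \<Omega>_def by measurable
      then have m1: "(\<lambda>u. indicator {0<..k} u *\<^sub>R rearr M \<phi> u powr q) \<in> borel_measurable lborel"
        by (simp only: fe)
      show ?thesis unfolding set_lebesgue_integral_def
      proof (rule integral_cong_AE[OF m1])
        show "(\<lambda>t. gI t powr q * indicator \<Omega> t) \<in> borel_measurable lborel" unfolding \<Omega>_def by measurable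
        show "AE x in lborel. indicator {0<..k} x *\<^sub>R rearr M \<phi> x powr q = gI x powr q * indicator \<Omega> x"
          using AE_lborel_singleton[of k] by eventually_elim (use q in \<open>auto simp: indicator_def gI_def \<Omega>_def rearr_eq\<close>)
      qed
    qed
    have e1: "(\<integral>u\<in>{0<..k}. rearr M \<phi> u \<partial>lborel) = (\<integral>t. gI t * indicator \<Omega> t \<partial>lborel)"
    proof -
      have "(\<integral>u\<in>{0<..k}. rearr M \<phi> u \<partial>lborel) = (\<integral>u\<in>{0<..k}. rearr M \<phi> u powr 1 \<partial>lborel)"
        unfolding set_lebesgue_integral_def
        by (intro Bochner_Integration.integral_cong refl) (auto simp: indicator_def rearr_eq g_def dp.rr_nn)
      also have "\<dots> = (\<integral>t. gI t powr 1 * indicator \<Omega> t \<partial>lborel)" by (rule eqq) simp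
      also have "\<dots> = (\<integral>t. gI t * indicator \<Omega> t \<partial>lborel)" using gI_nn by simp
      finally show ?thesis .
    qed
    show ?thesis unfolding RC_def eqq[OF p0] e1 ..
  qed
  finally show ?thesis .
qed


end
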